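(* Let $\theta>0$ and consider the Yule process with immigration with immigration rate $\theta$ and birth rate $1$. For $0\le a<b$ let $S(a,b)$ denote the number of families observable in $(a,b)$. Then for $0\le a<b\le c<d$, $$\mathrm{Cov}(S(a,b),S(c,d))=\theta\log\left(\frac{(e^b-e^a+1)(e^d-e^c+1)}{e^d-e^c+e^b-e^a+1}\right).$$
   Context: Yule process with immigration: at time $0$ the population is empty; immigrants arrive at the points of a homogeneous Poisson process of rate $\theta$ on $[0,\infty)$, and each immigrant founds a new family; every individual, independently of everything else, gives birth to a new member of its own family at rate $1$ (no deaths). A family is observable in an interval $(a,b)$ if at least one member of that family (including its founding immigrant) is born (arrives) during $(a,b)$. *)

theory Defs
  imports "HOL-Probability.Probability"
begin

(* Construction of the Yule process with immigration from independent exponential clocks: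
   X i     : i-th inter-arrival time of the immigration Poisson process (Exp(theta));
   Y k j   : waiting time in family k from size j+1 to size j+2 (Exp(j+1)),
             since each of the j+1 members gives birth at rate 1. *)

definition immigrant_arrival :: "(nat \<Rightarrow> 'a \<Rightarrow> real) \<Rightarrow> nat \<Rightarrow> 'a \<Rightarrow> real" where
  "immigrant_arrival X k \<omega> = (\<Sum>i\<le>k. X i \<omega>)"

fun family_birth :: "(nat \<Rightarrow> 'a \<Rightarrow> real) \<Rightarrow> (nat \<Rightarrow> nat \<Rightarrow> 'a \<Rightarrow> real) \<Rightarrow> nat \<Rightarrow> nat \<Rightarrow> 'a \<Rightarrow> real" where
  "family_birth X Y k 0 \<omega> = immigrant_arrival X k \<omega>"
| "family_birth X Y k (Suc n) \<omega> = family_birth X Y k n \<omega> + Y k n \<omega>"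

definition observable_families ::
  "(nat \<Rightarrow> 'a \<Rightarrow> real) \<Rightarrow> (nat \<Rightarrow> nat \<Rightarrow> 'a \<Rightarrow> real) \<Rightarrow> real \<Rightarrow> real \<Rightarrow> 'a \<Rightarrow> real" where
  "observable_families X Y a b \<omega> =
     real (card {k. \<exists>n. a < family_birth X Y k n \<omega> \<and> family_birth X Y k n \<omega> < b})"

definition (in prob_space) covariance :: "('a \<Rightarrow> real) \<Rightarrow> ('a \<Rightarrow> real) \<Rightarrow> real" where
  "covariance U V = expectation (\<lambda>\<omega>. (U \<omega> - expectation U) * (V \<omega> - expectation V))"

end

theory Submission
  imports Defs
begin

lemma nn_FTC_kinks:
  fixes F f :: "real \<Rightarrow> real"
  assumes S: "finite S" and cont: "continuous_on {a..} F"
   and der: "\<And>x. x > a \<Longrightarrow> x \<notin> S \<Longrightarrow> (F has_real_derivative f x) (at x)"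
   and nn: "\<And>x. x \<ge> a \<Longrightarrow> 0 \<le> f x"
   and lim: "(F \<longlongrightarrow> c) at_top"
   and meas: "f \<in> borel_measurable borel"
  shows "(\<integral>\<^sup>+x. ennreal (f x) * indicator {a..} x \<partial>lborel) = ennreal (c - F a)"
proof -
  have I: "(\<integral>\<^sup>+x. ennreal (f x) * indicator {a..a + real n} x \<partial>lborel) = ennreal (F (a + real n) - F a)" for n
  proof -
    have "(f has_integral (F (a + real n) - F a)) {a..a + real n}"
    proof (rule fundamental_theorem_of_calculus_interior_strong[OF S])
      show "a \<le> a + real n" by simp
      show "(F has_vector_derivative f x) (at x)" if "x \<in> {a<..<a + real n} - S" for x
        using der[of x] that by (auto simp: has_real_derivative_iff_has_vector_derivative)
      show "continuous_on {a..a + real n} F"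
        by (rule continuous_on_subset[OF cont]) auto
    qed
    then show ?thesis
      by (intro nn_integral_has_integral_lebesgue') (use nn in auto)
  qed
  have "(\<lambda>n. \<integral>\<^sup>+x. ennreal (f x) * indicator {a..a + real n} x \<partial>lborel)
        \<longlonglongrightarrow> (\<integral>\<^sup>+x. ennreal (f x) * indicator {a..} x \<partial>lborel)"
  proof (rule nn_integral_LIMSEQ)
    show "incseq (\<lambda>n x. ennreal (f x) * indicator {a..a + real n} x)"
      by (auto simp: incseq_def le_fun_def split: split_indicator intro!: mult_left_mono)
    show "(\<lambda>n. ennreal (f x) * indicator {a..a + real n} x) \<longlonglongrightarrow> ennreal (f x) * indicator {a..} x" for x
    proof (cases "x \<ge> a")
      case True
      obtain N :: nat where "x - a \<le> real N" using real_arch_simple by blast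
      then have "eventually (\<lambda>n. ennreal (f x) * indicator {a..a + real n} x = ennreal (f x) * indicator {a..} x) sequentially"
        using True by (auto simp: eventually_sequentially indicator_def intro!: exI[of _ N])
      then show ?thesis by (rule tendsto_eventually)
    next
      case False then show ?thesis by (simp add: indicator_def)
    qed
  qed (use meas in measurable)
  moreover have "(\<lambda>n. ennreal (F (a + real n) - F a)) \<longlonglongrightarrow> ennreal (c - F a)"
  proof (intro tendsto_ennrealI tendsto_diff tendsto_const)
    have "filterlim (\<lambda>n. a + real n) at_top sequentially"
      by (intro filterlim_tendsto_add_at_top[OF tendsto_const] filterlim_real_sequentially)
    then show "(\<lambda>n. F (a + real n)) \<longlonglongrightarrow> c"
      using lim by (rule filterlim_compose[rotated])
  qed
  ultimately show ?thesis using I LIMSEQ_unique by auto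
qed

definition ell :: "real \<Rightarrow> real \<Rightarrow> real \<Rightarrow> real" where
  "ell u v s = exp v - exp (max u (min v s))"

lemma ell_nonneg: "u \<le> v \<Longrightarrow> 0 \<le> ell u v s"
  by (auto simp: ell_def)

lemma ell_deriv:
  assumes "u \<le> v" "s \<noteq> u" "s \<noteq> v"
  shows "(ell u v has_real_derivative (if u < s \<and> s < v then - exp s else 0)) (at s)"
proof -
  consider "s < u" | "u < s \<and> s < v" | "v < s" using assms by linarith
  then show ?thesis
  proof cases
    case 1
    have "((\<lambda>_. exp v - exp u) has_real_derivative 0) (at s)" by (rule DERIV_const)
    then show ?thesis using 1
      by (rule_tac has_field_derivative_transform_within_open[where S="{..<u}"]) (auto simp: ell_def)
  next
    case 2
    have "((\<lambda>x. exp v - exp x) has_real_derivative - exp s) (at s)"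
      by (auto intro!: derivative_eq_intros)
    then show ?thesis using 2
      by (rule_tac has_field_derivative_transform_within_open[where S="{u<..<v}"]) (auto simp: ell_def)
  next
    case 3
    have "((\<lambda>_. 0) has_real_derivative 0) (at s)" by (rule DERIV_const)
    then show ?thesis using 3 assms
      by (rule_tac has_field_derivative_transform_within_open[where S="{v<..}"]) (auto simp: ell_def)
  qed
qed

lemma continuous_ell[continuous_intros]: "continuous_on A (ell u v)"
  unfolding ell_def by (intro continuous_intros)

lemma measurable_ell[measurable]: "ell u v \<in> borel_measurable borel"
  by (intro borel_measurable_continuous_onI continuous_ell)

locale twoint =
  fixes u1 v1 u2 v2 :: real
  assumes o1: "u1 \<le> v1" and o2: "v1 \<le> u2" and o3: "u2 \<le> v2"
begin

definition L :: "real \<Rightarrow> real" where "L s = ell u1 v1 s + ell u2 v2 s"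
definition inU :: "real \<Rightarrow> bool" where "inU s \<longleftrightarrow> (u1 < s \<and> s < v1) \<or> (u2 < s \<and> s < v2)"
definition g :: "real \<Rightarrow> real" where "g s = exp s + L s"
definition phi :: "real \<Rightarrow> nat \<Rightarrow> real" where "phi r m = (exp r / g r) ^ m"
definition q :: "real \<Rightarrow> real" where "q t = (if inU t then 0 else exp t / g t)"

lemma L_nonneg: "0 \<le> L s"
  using o1 o2 o3 by (auto simp: L_def intro!: add_nonneg_nonneg ell_nonneg)

lemma g_pos: "0 < g s"
  using L_nonneg[of s] by (simp add: g_def add_pos_nonneg)

lemma L_zero: "s \<ge> v2 \<Longrightarrow> L s = 0"
  using o1 o2 o3 by (auto simp: L_def ell_def max_def min_def)

lemma g_big: "s \<ge> v2 \<Longrightarrow> g s = exp s"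
  by (simp add: g_def L_zero)

lemma g_ge: "exp s \<le> g s"
  using L_nonneg[of s] by (simp add: g_def)

lemma measurable_L[measurable]: "L \<in> borel_measurable borel"
  unfolding L_def by measurable
lemma measurable_g[measurable]: "g \<in> borel_measurable borel"
  unfolding g_def by measurable
lemma measurable_inU[measurable]: "Measurable.pred borel inU"
  unfolding inU_def by measurable
lemma measurable_phi[measurable]: "(\<lambda>r. phi r m) \<in> borel_measurable borel"
  unfolding phi_def by measurable
lemma measurable_q[measurable]: "q \<in> borel_measurable borel"
  unfolding q_def by measurable

lemma continuous_L[continuous_intros]: "continuous_on A L"
  unfolding L_def by (intro continuous_intros)
lemma continuous_g[continuous_intros]: "continuous_on A g"
  unfolding g_def by (intro continuous_intros)

definition kinks :: "real set" where "kinks = {u1, v1, u2, v2}"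

lemma L_deriv:
  assumes "s \<notin> kinks"
  shows "(L has_real_derivative (if inU s then - exp s else 0)) (at s)"
proof -
  have "((\<lambda>s. ell u1 v1 s + ell u2 v2 s) has_real_derivative
     (if u1 < s \<and> s < v1 then - exp s else 0) + (if u2 < s \<and> s < v2 then - exp s else 0)) (at s)"
    using assms o1 o2 o3 by (intro DERIV_add ell_deriv) (auto simp: kinks_def)
  moreover have "(if u1 < s \<and> s < v1 then - exp s else 0) + (if u2 < s \<and> s < v2 then - exp s else 0)
     = (if inU s then - exp s else 0)"
    using o1 o2 o3 by (auto simp: inU_def)
  ultimately show ?thesis by (simp add: L_def[abs_def])
qed

lemma g_deriv:
  assumes "s \<notin> kinks"
  shows "(g has_real_derivative (if inU s then 0 else exp s)) (at s)"
proof -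
  have "((\<lambda>s. exp s + L s) has_real_derivative exp s + (if inU s then - exp s else 0)) (at s)"
    by (intro DERIV_add L_deriv assms DERIV_exp)
  then show ?thesis by (simp add: g_def[abs_def] split: if_splits)
qed

lemma q_le1: "q t \<le> 1"
  using g_ge[of t] g_pos[of t] by (auto simp: q_def divide_le_eq_1)
lemma q_nonneg: "0 \<le> q t"
  using g_pos[of t] by (auto simp: q_def)

end

context twoint begin

lemma g_shift_deriv:
  assumes "s + y \<notin> kinks"
  shows "((\<lambda>y. g (s + y)) has_real_derivative (if inU (s + y) then 0 else exp (s + y))) (at y)"
proof -
  have "(g has_real_derivative (if inU (s + y) then 0 else exp (s + y))) (at (s + y))"
    using g_deriv[of "s+y"] assms by simp
  moreover have "((\<lambda>y. s + y) has_real_derivative 1) (at y)"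
    by (auto intro!: derivative_eq_intros)
  ultimately show ?thesis using DERIV_chain2 by fastforce
qed

lemma one_step:
  assumes m: "0 < m"
  shows "(\<integral>\<^sup>+y. ennreal (exponential_density (real m) y) *
            ennreal (phi (s+y) (Suc m) * (if inU (s+y) then 0 else 1)) \<partial>lborel) = ennreal (phi s m)"
proof -
  define f where "f y = real m * exp (real m * s) * exp (s+y) / g (s+y) ^ Suc m * (if inU (s+y) then 0 else 1)" for y
  define F where "F y = - exp (real m * s) / g (s+y) ^ m" for y
  have gp: "\<And>x. 0 < g x" by (rule g_pos)
  have eq: "ennreal (exponential_density (real m) y) * ennreal (phi (s+y) (Suc m) * (if inU (s+y) then 0 else 1))
        = ennreal (f y) * indicator {0..} y" for y
  proof (cases "y < 0")
    case True then show ?thesis by (simp add: exponential_density_def)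
  next
    case False
    have "exp (- y * real m) * exp (s + y) ^ Suc m = exp (real m * s) * exp (s + y)"
      by (simp add: exp_of_nat_mult[symmetric] exp_add[symmetric] algebra_simps del: exp_of_nat_mult)
    then have "exponential_density (real m) y * (phi (s+y) (Suc m) * (if inU (s+y) then 0 else 1)) = f y"
      using False by (simp add: exponential_density_def phi_def f_def power_divide)
    moreover have "0 \<le> exponential_density (real m) y"
      using m by (simp add: exponential_density_def)
    ultimately show ?thesis using False
      by (subst ennreal_mult'[symmetric]) (auto simp: indicator_def)
  qed
  have "(\<integral>\<^sup>+y. ennreal (f y) * indicator {0..} y \<partial>lborel) = ennreal (0 - F 0)"
  proof (rule nn_FTC_kinks[where S="(\<lambda>k. k - s) ` kinks"])
    show "finite ((\<lambda>k. k - s) ` kinks)" by (simp add: kinks_def)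
    have cg: "continuous_on {0..} (\<lambda>x. g (s+x))"
      by (rule continuous_on_compose2[OF continuous_g[of UNIV]]) (auto intro: continuous_intros)
    show "continuous_on {0..} F"
      unfolding F_def by (intro continuous_intros cg) (metis gp less_irrefl power_not_zero)
    show "(F has_real_derivative f x) (at x)" if "x > 0" "x \<notin> (\<lambda>k. k - s) ` kinks" for x
    proof -
      have nk: "s + x \<notin> kinks" using that by (auto simp: image_iff)
      have gne: "g (s + x) \<noteq> 0" using gp[of "s+x"] by simp
      show ?thesis unfolding F_def
        apply (rule derivative_eq_intros g_shift_deriv[OF nk] refl | simp add: gne)+
        using gne m
        apply (simp add: f_def field_simps power_Suc)
        apply (cases m) apply simp apply (simp add: field_simps)
        done
    qed
    show "0 \<le> f x" for x
      using gp[of "s+x"] m by (simp add: f_def)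
    show "(F \<longlongrightarrow> 0) at_top"
    proof -
      have ev: "eventually (\<lambda>y. - exp (real m * s) / exp (s+y) ^ m = F y) at_top"
        using eventually_ge_at_top[of "v2 - s"] by eventually_elim (simp add: F_def g_big)
      have "((\<lambda>y. - exp (real m * s) / exp (s+y) ^ m) \<longlongrightarrow> 0) at_top"
      proof -
        have "filterlim (\<lambda>y. s + y) at_top at_top"
          by (rule filterlim_tendsto_add_at_top[OF tendsto_const filterlim_ident])
        then have "filterlim (\<lambda>y. exp (s + y)) at_top at_top"
          by (rule filterlim_compose[OF exp_at_top])
        then have "filterlim (\<lambda>y. exp (s + y) ^ m) at_top at_top"
          by (rule filterlim_pow_at_top[OF m])
        then have "((\<lambda>y. inverse (exp (s + y) ^ m)) \<longlongrightarrow> 0) at_top"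
          by (rule tendsto_inverse_0_at_top)
        from tendsto_mult[OF tendsto_const[of "- exp (real m * s)"] this]
        show ?thesis by (simp add: divide_inverse)
      qed
      then show ?thesis using ev by (rule tendsto_cong[THEN iffD1, rotated]) 
    qed
    show "f \<in> borel_measurable borel" unfolding f_def by measurable
  qed
  moreover have "0 - F 0 = phi s m"
    by (simp add: F_def phi_def power_divide exp_of_nat_mult[symmetric] mult.commute)
  ultimately show ?thesis by (simp add: eq)
qed

lemma integral_one_minus_q:
  "(\<integral>\<^sup>+t. ennreal (1 - q t) * indicator {0..} t \<partial>lborel) = ennreal (ln (1 + L 0))"
proof -
  define F where "F t = t - ln (g t)" for t
  have gp: "\<And>x. 0 < g x" by (rule g_pos)
  have "(\<integral>\<^sup>+t. ennreal (1 - q t) * indicator {0..} t \<partial>lborel) = ennreal (0 - F 0)"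
  proof (rule nn_FTC_kinks[where S="kinks"])
    show "finite kinks" by (simp add: kinks_def)
    show "continuous_on {0..} F"
      unfolding F_def by (intro continuous_intros) (metis gp less_irrefl)+
    show "(F has_real_derivative (1 - q x)) (at x)" if "x > 0" "x \<notin> kinks" for x
      unfolding F_def
      apply (rule derivative_eq_intros g_deriv[OF that(2)] refl | simp add: gp)+
      using gp[of x] by (simp add: q_def field_simps)
    show "0 \<le> 1 - q x" for x using q_le1[of x] by simp
    show "(F \<longlongrightarrow> 0) at_top"
    proof -
      have ev: "eventually (\<lambda>y. F y = 0) at_top"
        using eventually_ge_at_top[of "v2"] by eventually_elim (simp add: F_def g_big)
      show ?thesis using ev by (rule tendsto_eventually)
    qed
    show "(\<lambda>t. 1 - q t) \<in> borel_measurable borel" by measurable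
  qed
  then show ?thesis by (simp add: F_def g_def)
qed

end

lemma (in prob_space) indep_var_nn_integral:
  assumes ind: "indep_var S X T Y" and f: "f \<in> borel_measurable (S \<Otimes>\<^sub>M T)"
  shows "(\<integral>\<^sup>+\<omega>. f (X \<omega>, Y \<omega>) \<partial>M) = (\<integral>\<^sup>+x. \<integral>\<^sup>+y. f (x,y) \<partial>distr M T Y \<partial>distr M S X)"
proof -
  have rv: "random_variable S X" "random_variable T Y"
    using ind by (auto simp: indep_var_distribution_eq)
  have eq: "distr M S X \<Otimes>\<^sub>M distr M T Y = distr M (S \<Otimes>\<^sub>M T) (\<lambda>x. (X x, Y x))"
    using ind by (simp add: indep_var_distribution_eq)
  interpret X: prob_space "distr M S X" by (rule prob_space_distr) (rule rv)
  interpret Y: prob_space "distr M T Y" by (rule prob_space_distr) (rule rv)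
  interpret XY: pair_sigma_finite "distr M S X" "distr M T Y" ..
  have "(\<integral>\<^sup>+x. \<integral>\<^sup>+y. f (x,y) \<partial>distr M T Y \<partial>distr M S X) = integral\<^sup>N (distr M S X \<Otimes>\<^sub>M distr M T Y) f"
    using f by (intro Y.nn_integral_fst)
      (metis measurable_cong_sets sets_distr sets_pair_measure_cong)
  also have "\<dots> = integral\<^sup>N (distr M (S \<Otimes>\<^sub>M T) (\<lambda>x. (X x, Y x))) f" by (simp add: eq)
  also have "\<dots> = (\<integral>\<^sup>+\<omega>. f (X \<omega>, Y \<omega>) \<partial>M)"
    using rv f by (subst nn_integral_distr) (auto intro: measurable_Pair)
  finally show ?thesis by simp
qed

locale yule = prob_space M + twoint u1 v1 u2 v2 for M :: "'a measure" and u1 v1 u2 v2 +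
  fixes Yv :: "nat \<Rightarrow> 'a \<Rightarrow> real"
  assumes indY: "indep_vars (\<lambda>_. borel) Yv UNIV"
  and distY: "\<And>j. distributed M lborel (Yv j) (exponential_density (real (Suc j)))"
begin

lemma Yv_meas[measurable]: "Yv j \<in> borel_measurable M"
  using distY[of j] by (auto simp: distributed_def)

definition B :: "nat \<Rightarrow> 'a \<Rightarrow> real" where "B n \<omega> = (\<Sum>j<n. Yv j \<omega>)"

lemma B_meas[measurable]: "B n \<in> borel_measurable M"
  unfolding B_def by measurable

lemma step_indep:
  "indep_var (PiM {..<n} (\<lambda>_. borel)) (\<lambda>\<omega>. restrict (\<lambda>j. Yv j \<omega>) {..<n})
                  (PiM {n} (\<lambda>_. borel)) (\<lambda>\<omega>. restrict (\<lambda>j. Yv j \<omega>) {n})"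
    by (rule indep_var_restrict[OF indY]) auto

definition Ev :: "real \<Rightarrow> nat \<Rightarrow> (nat \<Rightarrow> real) \<Rightarrow> bool" where
  "Ev t n v \<longleftrightarrow> (\<forall>m\<le>n. \<not> inU (t + (\<Sum>j<m. v j)))"

lemma sum_meas: "(m::nat) \<le> n \<Longrightarrow> (\<lambda>v. \<Sum>j<m. v j :: real) \<in> borel_measurable (PiM {..<n} (\<lambda>_. borel))"
proof (rule borel_measurable_sum[of "{..<m}" "\<lambda>j v. v j"])
  fix j assume "m \<le> n" "j \<in> {..<m}"
  then have "j \<in> {..<n}" by auto
  then show "(\<lambda>v. v j) \<in> borel_measurable (PiM {..<n} (\<lambda>_. borel))"
    by (rule measurable_component_singleton)
qed

lemma Ev_meas[measurable]: "Measurable.pred (PiM {..<n} (\<lambda>_. borel)) (Ev t n)"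
proof -
  have "Ev t n = (\<lambda>v. \<forall>m\<in>{..n}. \<not> inU (t + (\<Sum>j<m. v j)))"
    by (auto simp: Ev_def fun_eq_iff)
  also have "Measurable.pred (PiM {..<n} (\<lambda>_. borel)) \<dots>"
  proof (intro pred_intros_finite)
    fix m assume "m \<in> {..n}"
    have "(\<lambda>v. \<Sum>j<m. v j :: real) \<in> borel_measurable (PiM {..<n} (\<lambda>_. borel))"
    proof (rule borel_measurable_sum[of "{..<m}" "\<lambda>j v. v j"])
      fix j assume "j \<in> {..<m}"
      then have "j \<in> {..<n}" using \<open>m \<in> {..n}\<close> by auto
      then show "(\<lambda>v. v j) \<in> borel_measurable (PiM {..<n} (\<lambda>_. borel))"
        by (rule measurable_component_singleton)
    qed
    then show "Measurable.pred (PiM {..<n} (\<lambda>_. borel)) (\<lambda>v. \<not> inU (t + (\<Sum>j<m. v j)))"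
      by measurable
  qed simp
  finally show ?thesis .
qed

lemma V_meas[measurable]: "(\<lambda>\<omega>. restrict (\<lambda>j. Yv j \<omega>) A) \<in> measurable M (PiM A (\<lambda>_. borel))"
  by measurable

lemma C_step:
  "(\<integral>\<^sup>+\<omega>. ennreal (phi (t + B (Suc n) \<omega>) (Suc (Suc n)) * (if Ev t (Suc n) (\<lambda>j. Yv j \<omega>) then 1 else 0)) \<partial>M)
 = (\<integral>\<^sup>+\<omega>. ennreal (phi (t + B n \<omega>) (Suc n) * (if Ev t n (\<lambda>j. Yv j \<omega>) then 1 else 0)) \<partial>M)"
proof -
  define V where "V \<omega> = restrict (\<lambda>j. Yv j \<omega>) {..<n}" for \<omega>
  define W where "W \<omega> = restrict (\<lambda>j. Yv j \<omega>) {n}" for \<omega>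
  define h where "h x = ennreal (phi (t + (\<Sum>j<n. fst x j) + snd x n) (Suc (Suc n)) * (if Ev t n (fst x) then 1 else 0)
       * (if inU (t + (\<Sum>j<n. fst x j) + snd x n) then 0 else 1))" for x :: "(nat \<Rightarrow> real) \<times> (nat \<Rightarrow> real)"
  define k where "k v = ennreal (phi (t + (\<Sum>j<n. v j)) (Suc n) * (if Ev t n v then 1 else 0))" for v :: "nat \<Rightarrow> real"
  have sumV: "(\<Sum>j<m. V \<omega> j) = B m \<omega>" if "m \<le> n" for m \<omega>
    using that by (auto simp: V_def B_def intro!: sum.cong)
  have EvV: "Ev t n (V \<omega>) \<longleftrightarrow> Ev t n (\<lambda>j. Yv j \<omega>)" for \<omega>
    using sumV by (auto simp: Ev_def B_def)
  have h_meas: "h \<in> borel_measurable (PiM {..<n} (\<lambda>_. borel) \<Otimes>\<^sub>M PiM {n} (\<lambda>_. borel))"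
  proof -
    have s: "(\<lambda>x. \<Sum>j<n. fst x j :: real) \<in> borel_measurable (PiM {..<n} (\<lambda>_. borel) \<Otimes>\<^sub>M PiM {n} (\<lambda>_. borel))"
      by (rule measurable_compose[OF measurable_fst sum_meas]) simp
    have w: "(\<lambda>x. snd x n :: real) \<in> borel_measurable (PiM {..<n} (\<lambda>_. borel) \<Otimes>\<^sub>M PiM {n} (\<lambda>_. borel))"
      by (rule measurable_compose[OF measurable_snd measurable_component_singleton]) simp
    have e: "Measurable.pred (PiM {..<n} (\<lambda>_. borel) \<Otimes>\<^sub>M PiM {n} (\<lambda>_. borel)) (\<lambda>x. Ev t n (fst x))"
      by (rule measurable_compose[OF measurable_fst Ev_meas])
    show ?thesis unfolding h_def using s w e by measurable
  qed
  have "(\<integral>\<^sup>+\<omega>. ennreal (phi (t + B (Suc n) \<omega>) (Suc (Suc n)) * (if Ev t (Suc n) (\<lambda>j. Yv j \<omega>) then 1 else 0)) \<partial>M)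
      = (\<integral>\<^sup>+\<omega>. h (V \<omega>, W \<omega>) \<partial>M)"
  proof (rule nn_integral_cong)
    fix \<omega>
    have "Ev t (Suc n) (\<lambda>j. Yv j \<omega>) \<longleftrightarrow> Ev t n (\<lambda>j. Yv j \<omega>) \<and> \<not> inU (t + B (Suc n) \<omega>)"
      by (auto simp: Ev_def B_def le_Suc_eq)
    moreover have "B (Suc n) \<omega> = (\<Sum>j<n. V \<omega> j) + W \<omega> n"
      using sumV[of n \<omega>] by (simp add: B_def W_def)
    ultimately show "ennreal (phi (t + B (Suc n) \<omega>) (Suc (Suc n)) * (if Ev t (Suc n) (\<lambda>j. Yv j \<omega>) then 1 else 0)) = h (V \<omega>, W \<omega>)"
      by (simp add: h_def EvV add.assoc)
  qed
  also have "\<dots> = (\<integral>\<^sup>+v. \<integral>\<^sup>+w. h (v,w) \<partial>distr M (PiM {n} (\<lambda>_. borel)) W \<partial>distr M (PiM {..<n} (\<lambda>_. borel)) V)"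
    unfolding V_def W_def by (rule indep_var_nn_integral[OF step_indep h_meas])
  also have "\<dots> = (\<integral>\<^sup>+v. k v \<partial>distr M (PiM {..<n} (\<lambda>_. borel)) V)"
  proof (rule nn_integral_cong)
    fix v :: "nat \<Rightarrow> real"
    assume vsp: "v \<in> space (distr M (PiM {..<n} (\<lambda>_. borel)) V)"
    define s where "s = t + (\<Sum>j<n. v j)"
    have "(\<integral>\<^sup>+w. h (v,w) \<partial>distr M (PiM {n} (\<lambda>_. borel)) W) = (\<integral>\<^sup>+\<omega>. h (v, W \<omega>) \<partial>M)"
    proof (rule nn_integral_distr)
      show "W \<in> measurable M (PiM {n} (\<lambda>_. borel))" unfolding W_def by measurable
      show "(\<lambda>w. h (v, w)) \<in> borel_measurable (distr M (PiM {n} (\<lambda>_. borel)) W)"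
        using vsp by (auto intro!: measurable_Pair2[OF h_meas])
    qed
    also have "\<dots> = (\<integral>\<^sup>+\<omega>. ennreal (if Ev t n v then 1 else 0) *
          ennreal (phi (s + Yv n \<omega>) (Suc (Suc n)) * (if inU (s + Yv n \<omega>) then 0 else 1)) \<partial>M)"
      by (intro nn_integral_cong) (simp add: h_def W_def s_def add.assoc)
    also have "\<dots> = ennreal (if Ev t n v then 1 else 0) *
          (\<integral>\<^sup>+\<omega>. ennreal (phi (s + Yv n \<omega>) (Suc (Suc n)) * (if inU (s + Yv n \<omega>) then 0 else 1)) \<partial>M)"
      by (rule nn_integral_cmult) measurable
    also have "(\<integral>\<^sup>+\<omega>. ennreal (phi (s + Yv n \<omega>) (Suc (Suc n)) * (if inU (s + Yv n \<omega>) then 0 else 1)) \<partial>M)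
       = (\<integral>\<^sup>+y. ennreal (exponential_density (real (Suc n)) y) *
            ennreal (phi (s+y) (Suc (Suc n)) * (if inU (s+y) then 0 else 1)) \<partial>lborel)"
      by (rule distributed_nn_integral[OF distY, symmetric]) measurable
    also have "\<dots> = ennreal (phi s (Suc n))"
      by (rule one_step) simp
    finally show "(\<integral>\<^sup>+w. h (v,w) \<partial>distr M (PiM {n} (\<lambda>_. borel)) W) = k v"
      by (simp add: k_def s_def ennreal_mult'[symmetric] mult.commute)
  qed
  also have "\<dots> = (\<integral>\<^sup>+\<omega>. k (V \<omega>) \<partial>M)"
  proof (rule nn_integral_distr)
    show "V \<in> measurable M (PiM {..<n} (\<lambda>_. borel))" unfolding V_def by measurable
    have "(\<lambda>v. \<Sum>j<n. v j :: real) \<in> borel_measurable (PiM {..<n} (\<lambda>_. borel))" by (rule sum_meas) simp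
    then show "k \<in> borel_measurable (distr M (PiM {..<n} (\<lambda>_. borel)) V)"
      unfolding k_def by measurable
  qed
  also have "\<dots> = (\<integral>\<^sup>+\<omega>. ennreal (phi (t + B n \<omega>) (Suc n) * (if Ev t n (\<lambda>j. Yv j \<omega>) then 1 else 0)) \<partial>M)"
    by (intro nn_integral_cong) (simp add: k_def sumV EvV)
  finally show ?thesis .
qed

end

context yule begin

lemma C_all:
  "(\<integral>\<^sup>+\<omega>. ennreal (phi (t + B n \<omega>) (Suc n) * (if Ev t n (\<lambda>j. Yv j \<omega>) then 1 else 0)) \<partial>M) = ennreal (q t)"
proof (induction n)
  case 0
  have "(\<integral>\<^sup>+\<omega>. ennreal (phi (t + B 0 \<omega>) (Suc 0) * (if Ev t 0 (\<lambda>j. Yv j \<omega>) then 1 else 0)) \<partial>M)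
      = (\<integral>\<^sup>+\<omega>. ennreal (q t) \<partial>M)"
    by (intro nn_integral_cong) (simp add: B_def Ev_def q_def phi_def)
  also have "\<dots> = ennreal (q t)" by (simp add: emeasure_space_1)
  finally show ?case .
next
  case (Suc n)
  then show ?case using C_step by simp
qed

lemma exp_moment:
  "(\<integral>\<^sup>+\<omega>. ennreal (exp (- Yv j \<omega>)) \<partial>M) = ennreal (real (Suc j) / real (Suc (Suc j)))"
proof -
  define l where "l = real (Suc j)"
  have l: "0 < l" by (simp add: l_def)
  have "(\<integral>\<^sup>+\<omega>. ennreal (exp (- Yv j \<omega>)) \<partial>M)
     = (\<integral>\<^sup>+y. ennreal (exponential_density l y) * ennreal (exp (- y)) \<partial>lborel)"
    unfolding l_def by (rule distributed_nn_integral[OF distY, symmetric]) measurable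
  also have "\<dots> = (\<integral>\<^sup>+y. ennreal (l * exp (- (l + 1) * y)) * indicator {0..} y \<partial>lborel)"
    using l by (intro nn_integral_cong)
       (auto simp: exponential_density_def indicator_def ennreal_mult'[symmetric] exp_add[symmetric] algebra_simps)
  also have "\<dots> = ennreal (0 - (- l / (l + 1) * exp (- (l + 1) * 0)))"
  proof (rule nn_FTC_kinks[where S="{}"])
    show "continuous_on {0..} (\<lambda>y. - l / (l + 1) * exp (- (l + 1) * y))" by (intro continuous_intros)
    show "((\<lambda>y. - l / (l + 1) * exp (- (l + 1) * y)) has_real_derivative l * exp (- (l + 1) * x)) (at x)" for x
    proof -
      have "((\<lambda>y. - l / (l + 1) * exp (- (l + 1) * y)) has_real_derivative (- l / (l + 1)) * (exp (- (l + 1) * x) * (- (l + 1) * 1))) (at x)"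
        by (intro DERIV_cmult DERIV_fun_exp DERIV_ident)
      moreover have "(- l / (l + 1)) * (exp (- (l + 1) * x) * (- (l + 1) * 1)) = l * exp (- (l + 1) * x)"
        using l by (simp add: field_simps)
      ultimately show ?thesis by simp
    qed
    show "0 \<le> l * exp (- (l + 1) * x)" for x using l by simp
    show "((\<lambda>y. - l / (l + 1) * exp (- (l + 1) * y)) \<longlongrightarrow> 0) at_top"
    proof -
      have "filterlim (\<lambda>y. (l + 1) * y) at_top at_top"
        using l by (intro filterlim_tendsto_pos_mult_at_top[OF tendsto_const _ filterlim_ident]) simp
      then have "filterlim (\<lambda>y. exp ((l + 1) * y)) at_top at_top"
        by (rule filterlim_compose[OF exp_at_top])
      then have lim: "((\<lambda>y. inverse (exp ((l + 1) * y))) \<longlongrightarrow> 0) at_top"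
        by (rule tendsto_inverse_0_at_top)
      have eq: "exp (- (l + 1) * y) = inverse (exp ((l + 1) * y))" for y
        by (simp add: exp_minus[symmetric] algebra_simps)
      from tendsto_mult[OF tendsto_const[of "- l / (l + 1)"] lim]
      show ?thesis unfolding eq by simp
    qed
  qed auto
  also have "0 - (- l / (l + 1) * exp (- (l + 1) * 0)) = real (Suc j) / real (Suc (Suc j))"
    by (simp add: l_def field_simps)
  finally show ?thesis .
qed

lemma exp_B: "(\<integral>\<^sup>+\<omega>. ennreal (exp (- B n \<omega>)) \<partial>M) = ennreal (1 / real (Suc n))"
proof -
  have ind: "indep_vars (\<lambda>_. borel) (\<lambda>j \<omega>. ennreal (exp (- Yv j \<omega>))) {..<n}"
    by (rule indep_vars_compose2[where X=Yv, OF indep_vars_subset[OF indY]]) auto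
  have "(\<integral>\<^sup>+\<omega>. ennreal (exp (- B n \<omega>)) \<partial>M) = (\<integral>\<^sup>+\<omega>. (\<Prod>j<n. ennreal (exp (- Yv j \<omega>))) \<partial>M)"
    by (intro nn_integral_cong) (simp add: B_def exp_sum[symmetric] prod_ennreal sum_negf)
  also have "\<dots> = (\<Prod>j<n. \<integral>\<^sup>+\<omega>. ennreal (exp (- Yv j \<omega>)) \<partial>M)"
    by (rule indep_vars_nn_integral[OF _ ind]) auto
  also have "\<dots> = (\<Prod>j<n. ennreal (real (Suc j) / real (Suc (Suc j))))"
    by (simp add: exp_moment)
  also have "\<dots> = ennreal (\<Prod>j<n. real (Suc j) / real (Suc (Suc j)))"
    by (simp add: prod_ennreal)
  also have "(\<Prod>j<n. real (Suc j) / real (Suc (Suc j))) = 1 / real (Suc n)"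
    by (induction n) (auto simp: field_simps)
  finally show ?thesis .
qed

lemma phi_le1: "phi r m \<le> 1"
  using g_ge[of r] g_pos[of r] by (auto simp: phi_def intro!: power_le_one)
lemma phi_nonneg: "0 \<le> phi r m"
  using g_pos[of r] by (auto simp: phi_def)

lemma yule_avoid: "emeasure M {\<omega>\<in>space M. \<forall>n. \<not> inU (t + B n \<omega>)} = ennreal (q t)"
proof -
  define E where "E n = {\<omega>\<in>space M. \<forall>m\<le>n. \<not> inU (t + B m \<omega>)}" for n
  define c where "c = exp (v2 - t)"
  have Ev_iff: "Ev t n (\<lambda>j. Yv j \<omega>) \<longleftrightarrow> (\<forall>m\<le>n. \<not> inU (t + B m \<omega>))" for n \<omega>
    by (simp add: Ev_def B_def)
  have E_sets: "E n \<in> sets M" for n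
  proof -
    have "E n = {\<omega>\<in>space M. \<forall>m\<in>{..n}. \<not> inU (t + B m \<omega>)}" by (auto simp: E_def)
    also have "\<dots> \<in> sets M" by measurable
    finally show ?thesis .
  qed
  have lower: "q t \<le> measure M (E n)" for n
  proof -
    have "ennreal (q t) = (\<integral>\<^sup>+\<omega>. ennreal (phi (t + B n \<omega>) (Suc n) * (if Ev t n (\<lambda>j. Yv j \<omega>) then 1 else 0)) \<partial>M)"
      by (rule C_all[symmetric])
    also have "\<dots> \<le> (\<integral>\<^sup>+\<omega>. indicator (E n) \<omega> \<partial>M)"
      by (intro nn_integral_mono) (auto simp: E_def Ev_iff phi_le1 indicator_def)
    also have "\<dots> = ennreal (measure M (E n))"
      using E_sets by (simp add: emeasure_eq_measure)
    finally show ?thesis using q_nonneg[of t] by (simp add: ennreal_le_iff)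
  qed
  have upper: "measure M (E n) \<le> q t + c / real (Suc n)" for n
  proof -
    have "ennreal (measure M (E n)) = (\<integral>\<^sup>+\<omega>. indicator (E n) \<omega> \<partial>M)"
      using E_sets by (simp add: emeasure_eq_measure)
    also have "\<dots> \<le> (\<integral>\<^sup>+\<omega>. ennreal (phi (t + B n \<omega>) (Suc n) * (if Ev t n (\<lambda>j. Yv j \<omega>) then 1 else 0))
                      + ennreal c * ennreal (exp (- B n \<omega>)) \<partial>M)"
    proof (intro nn_integral_mono)
      fix \<omega> assume "\<omega> \<in> space M"
      show "indicator (E n) \<omega> \<le> ennreal (phi (t + B n \<omega>) (Suc n) * (if Ev t n (\<lambda>j. Yv j \<omega>) then 1 else 0))
                      + ennreal c * ennreal (exp (- B n \<omega>))"
      proof (cases "v2 \<le> t + B n \<omega>")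
        case True
        then have "phi (t + B n \<omega>) (Suc n) = 1" by (simp add: phi_def g_big)
        then show ?thesis using \<open>\<omega> \<in> space M\<close> by (auto simp: E_def Ev_iff indicator_def)
      next
        case False
        then have "1 \<le> c * exp (- B n \<omega>)"
          by (simp add: c_def exp_add[symmetric])
        then have "1 \<le> ennreal c * ennreal (exp (- B n \<omega>))"
          by (simp add: ennreal_mult'[symmetric] c_def)
        moreover have "indicator (E n) \<omega> \<le> (1::ennreal)" by (simp add: indicator_def)
        ultimately show ?thesis by (meson add_increasing order_trans zero_le)
      qed
    qed
    also have "\<dots> = (\<integral>\<^sup>+\<omega>. ennreal (phi (t + B n \<omega>) (Suc n) * (if Ev t n (\<lambda>j. Yv j \<omega>) then 1 else 0)) \<partial>M)
                    + ennreal c * (\<integral>\<^sup>+\<omega>. ennreal (exp (- B n \<omega>)) \<partial>M)"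
    proof -
      have m1: "(\<lambda>\<omega>. Ev t n (\<lambda>j. Yv j \<omega>)) \<in> measurable M (count_space UNIV)"
        unfolding Ev_iff by (simp add: atMost_iff[symmetric] del: atMost_iff) measurable
      show ?thesis using m1 by (subst nn_integral_add) (auto simp: nn_integral_cmult)
    qed
    also have "\<dots> = ennreal (q t + c / real (Suc n))"
      using q_nonneg[of t]
      by (simp add: C_all exp_B ennreal_mult'[symmetric] c_def)
    finally have X: "ennreal (measure M (E n)) \<le> ennreal (q t + c / real (Suc n))" .
    have "0 \<le> q t + c / real (Suc n)" using q_nonneg[of t] by (simp add: c_def)
    with X show ?thesis by (simp only: ennreal_le_iff)
  qed
  have lim1: "(\<lambda>n. measure M (E n)) \<longlonglongrightarrow> measure M (\<Inter>n. E n)"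
    by (rule finite_Lim_measure_decseq) (auto simp: E_sets decseq_def E_def)
  have lim2: "(\<lambda>n. measure M (E n)) \<longlonglongrightarrow> q t"
  proof (rule tendsto_sandwich[of "\<lambda>_. q t" _ _ "\<lambda>n. q t + c / real (Suc n)"])
    show "eventually (\<lambda>n. q t \<le> measure M (E n)) sequentially" using lower by simp
    show "eventually (\<lambda>n. measure M (E n) \<le> q t + c / real (Suc n)) sequentially" using upper by simp
    show "(\<lambda>n. q t + c / real (Suc n)) \<longlonglongrightarrow> q t"
      using tendsto_add[OF tendsto_const[of "q t"] tendsto_mult[OF tendsto_const[of c] LIMSEQ_inverse_real_of_nat]]
      by (simp add: divide_inverse)
  qed simp
  have "(\<Inter>n. E n) = {\<omega>\<in>space M. \<forall>n. \<not> inU (t + B n \<omega>)}"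
    by (auto simp: E_def)
  then have "measure M {\<omega>\<in>space M. \<forall>n. \<not> inU (t + B n \<omega>)} = q t"
    using LIMSEQ_unique[OF lim1 lim2] by simp
  then show ?thesis by (simp add: emeasure_eq_measure)
qed

end

lemma (in prob_space) indep_sets_reindex:
  assumes ind: "indep_sets F (f ` I)" and inj: "inj_on f I"
  shows "indep_sets (\<lambda>i. F (f i)) I"
proof (rule indep_setsI)
  show "F (f i) \<subseteq> events" if "i \<in> I" for i
    using ind that by (auto simp: indep_sets_def)
next
  fix A J assume J: "J \<noteq> {}" "J \<subseteq> I" "finite J" and A: "\<forall>j\<in>J. A j \<in> F (f j)"
  define A' where "A' x = A (the_inv_into I f x)" for x
  have A'f: "A' (f j) = A j" if "j \<in> J" for j
    using J that inj by (auto simp: A'_def the_inv_into_f_f)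
  have "prob (\<Inter>x\<in>f ` J. A' x) = (\<Prod>x\<in>f ` J. prob (A' x))"
    by (rule indep_setsD[OF ind]) (use J A A'f in auto)
  moreover have "(\<Inter>x\<in>f ` J. A' x) = (\<Inter>j\<in>J. A j)" using A'f by auto
  moreover have "(\<Prod>x\<in>f ` J. prob (A' x)) = (\<Prod>j\<in>J. prob (A j))"
    using inj J A'f by (subst prod.reindex) (auto intro: inj_on_subset intro!: prod.cong)
  ultimately show "prob (\<Inter>j\<in>J. A j) = (\<Prod>j\<in>J. prob (A j))" by simp
qed

lemma (in prob_space) indep_vars_reindex:
  assumes ind: "indep_vars M' X (f ` I)" and inj: "inj_on f I"
  shows "indep_vars (\<lambda>i. M' (f i)) (\<lambda>i. X (f i)) I"
  using ind unfolding indep_vars_def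
  by (auto intro!: indep_sets_reindex[OF _ inj, where F="\<lambda>i. sigma_sets (space M) {X i -` A \<inter> space M |A. A \<in> sets (M' i)}", simplified])

lemma (in prob_space) indep_var_nn_integral':
  assumes ind: "indep_var S X T Y" and f: "f \<in> borel_measurable (S \<Otimes>\<^sub>M T)"
  shows "(\<integral>\<^sup>+\<omega>. f (X \<omega>, Y \<omega>) \<partial>M) = (\<integral>\<^sup>+\<omega>. \<integral>\<^sup>+\<omega>'. f (X \<omega>, Y \<omega>') \<partial>M \<partial>M)"
proof -
  have rv: "random_variable S X" "random_variable T Y"
    using ind by (auto simp: indep_var_distribution_eq)
  interpret Yd: prob_space "distr M T Y" by (rule prob_space_distr) (rule rv)
  have f': "f \<in> borel_measurable (S \<Otimes>\<^sub>M distr M T Y)"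
    using f by (metis measurable_cong_sets sets_distr sets_pair_measure_cong)
  have "(\<integral>\<^sup>+\<omega>. f (X \<omega>, Y \<omega>) \<partial>M) = (\<integral>\<^sup>+x. \<integral>\<^sup>+y. f (x,y) \<partial>distr M T Y \<partial>distr M S X)"
    by (rule indep_var_nn_integral[OF ind f])
  also have "\<dots> = (\<integral>\<^sup>+\<omega>. \<integral>\<^sup>+y. f (X \<omega>,y) \<partial>distr M T Y \<partial>M)"
    by (rule nn_integral_distr[OF rv(1)]) (use Yd.borel_measurable_nn_integral_fst[OF f'] in simp)
  also have "\<dots> = (\<integral>\<^sup>+\<omega>. \<integral>\<^sup>+\<omega>'. f (X \<omega>, Y \<omega>') \<partial>M \<partial>M)"
  proof (rule nn_integral_cong)
    fix \<omega> assume "\<omega> \<in> space M"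
    then have "X \<omega> \<in> space S" using rv(1) by (auto simp: measurable_def)
    then show "(\<integral>\<^sup>+y. f (X \<omega>,y) \<partial>distr M T Y) = (\<integral>\<^sup>+\<omega>'. f (X \<omega>, Y \<omega>') \<partial>M)"
      by (intro nn_integral_distr[OF rv(2)]) (use f in simp)
  qed
  finally show ?thesis .
qed

locale imm = prob_space M for M :: "'a measure" +
  fixes \<theta> :: real and X :: "nat \<Rightarrow> 'a \<Rightarrow> real" and Y :: "nat \<Rightarrow> nat \<Rightarrow> 'a \<Rightarrow> real"
  assumes theta: "0 < \<theta>"
  and indZ: "indep_vars (\<lambda>_. borel) (\<lambda>i. case i of Inl k \<Rightarrow> X k | Inr (k, j) \<Rightarrow> Y k j) UNIV"
  and distX: "\<And>k. distributed M lborel (X k) (exponential_density \<theta>)"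
  and distYY: "\<And>k j. distributed M lborel (Y k j) (exponential_density (real (Suc j)))"
begin

definition Z :: "nat + nat \<times> nat \<Rightarrow> 'a \<Rightarrow> real" where
  "Z i = (case i of Inl k \<Rightarrow> X k | Inr (k, j) \<Rightarrow> Y k j)"

lemma indZ': "indep_vars (\<lambda>_. borel) Z UNIV"
  using indZ by (simp add: Z_def[abs_def])

lemma X_meas[measurable]: "X k \<in> borel_measurable M"
  using distX[of k] by (auto simp: distributed_def)
lemma Y_meas[measurable]: "Y k j \<in> borel_measurable M"
  using distYY[of k j] by (auto simp: distributed_def)
lemma Z_meas[measurable]: "Z i \<in> borel_measurable M"
  by (cases i) (auto simp: Z_def)

definition T :: "nat \<Rightarrow> 'a \<Rightarrow> real" where "T k \<omega> = (\<Sum>i\<le>k. X i \<omega>)"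
definition Ys :: "nat \<Rightarrow> 'a \<Rightarrow> nat \<Rightarrow> real" where "Ys k \<omega> = (\<lambda>j. Y k j \<omega>)"

lemma T_meas[measurable]: "T k \<in> borel_measurable M"
  unfolding T_def by measurable

lemma Ys_meas[measurable]: "Ys k \<in> measurable M (PiM UNIV (\<lambda>_. borel))"
proof -
  have "Ys k = (\<lambda>\<omega>. restrict (\<lambda>j. Y k j \<omega>) UNIV)" by (simp add: Ys_def[abs_def] restrict_def)
  also have "\<dots> \<in> measurable M (PiM UNIV (\<lambda>_. borel))" by measurable
  finally show ?thesis .
qed

lemma family_birth_eq: "family_birth X Y k n \<omega> = T k \<omega> + (\<Sum>j<n. Y k j \<omega>)"
  by (induction n) (auto simp: T_def immigrant_arrival_def)

lemma indep_Yk: "indep_vars (\<lambda>_. borel) (Y k) UNIV"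
proof -
  have "indep_vars (\<lambda>_. borel) Z ((\<lambda>j. Inr (k, j)) ` UNIV)"
    by (rule indep_vars_subset[OF indZ']) auto
  from indep_vars_reindex[OF this] show ?thesis
    by (simp add: Z_def inj_on_def)
qed

lemma indep_X: "indep_vars (\<lambda>_. borel) X A"
proof -
  have "indep_vars (\<lambda>_. borel) Z (Inl ` A)"
    by (rule indep_vars_subset[OF indZ']) auto
  from indep_vars_reindex[OF this] show ?thesis
    by (simp add: Z_def inj_on_def)
qed

lemma yule_k: "twoint u1 v1 u2 v2 \<Longrightarrow> yule M u1 v1 u2 v2 (Y k)"
  by (intro_locales) (auto simp: yule_axioms_def indep_Yk distYY simp del: of_nat_Suc)

lemma erlang_sum:
  assumes "finite A" "A \<noteq> {}"
  shows "distributed M lborel (\<lambda>\<omega>. \<Sum>i\<in>A. X i \<omega>) (erlang_density (card A - 1) \<theta>)"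
  by (rule exponential_distributed_sum[OF assms theta distX indep_X])

lemma T_distr: "distributed M lborel (T k) (erlang_density k \<theta>)"
  using erlang_sum[of "{..k}"] by (simp add: T_def[abs_def])

end

context imm begin

definition GA :: "(nat + nat \<times> nat) set \<Rightarrow> 'a \<Rightarrow> (nat + nat \<times> nat) \<Rightarrow> real" where
  "GA A \<omega> = restrict (\<lambda>i. Z i \<omega>) A"

lemma GA_meas[measurable]: "GA A \<in> measurable M (PiM A (\<lambda>_. borel))"
  unfolding GA_def by measurable

lemma tf_meas:
  fixes A :: "(nat + nat \<times> nat) set"
  assumes "Inl ` I \<subseteq> A"
  shows "(\<lambda>z. \<Sum>i\<in>I. z (Inl i) :: real) \<in> borel_measurable (PiM A (\<lambda>_. borel))"
proof (rule borel_measurable_sum[of I "\<lambda>i z. z (Inl i)"])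
  fix i assume "i \<in> I"
  then have "Inl i \<in> A" using assms by auto
  then show "(\<lambda>z. z (Inl i)) \<in> borel_measurable (PiM A (\<lambda>_. borel))"
    by (rule measurable_component_singleton)
qed

lemma ysf_meas:
  fixes A :: "(nat + nat \<times> nat) set"
  assumes "range (\<lambda>j. Inr (k, j)) \<subseteq> A"
  shows "(\<lambda>z j. z (Inr (k, j)) :: real) \<in> measurable (PiM A (\<lambda>_. borel)) (PiM UNIV (\<lambda>_. borel))"
proof -
  have "(\<lambda>z j. z (Inr (k, j)) :: real) = (\<lambda>z. restrict (\<lambda>j. z (Inr (k, j))) UNIV)"
    by (simp add: restrict_def)
  also have "\<dots> \<in> measurable (PiM A (\<lambda>_. borel)) (PiM UNIV (\<lambda>_. borel))"
  proof (rule measurable_restrict)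
    fix j :: nat
    have "Inr (k, j) \<in> A" using assms by auto
    then show "(\<lambda>z. z (Inr (k, j)) :: real) \<in> measurable (PiM A (\<lambda>_. borel)) borel"
      by (rule measurable_component_singleton)
  qed
  finally show ?thesis .
qed

lemma G1:
  assumes F: "F \<in> borel_measurable (borel \<Otimes>\<^sub>M PiM UNIV (\<lambda>_. borel))"
  shows "(\<integral>\<^sup>+\<omega>. F (\<Sum>i\<in>I. X i \<omega>, Ys k \<omega>) \<partial>M) = (\<integral>\<^sup>+\<omega>. \<integral>\<^sup>+\<omega>'. F (\<Sum>i\<in>I. X i \<omega>, Ys k \<omega>') \<partial>M \<partial>M)"
proof -
  define A :: "(nat + nat \<times> nat) set" where "A = Inl ` I"
  define B :: "(nat + nat \<times> nat) set" where "B = range (\<lambda>j. Inr (k, j))"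
  define f where "f x = F (\<Sum>i\<in>I. fst x (Inl i), \<lambda>j. snd x (Inr (k, j)))" for x :: "((nat + nat \<times> nat) \<Rightarrow> real) \<times> ((nat + nat \<times> nat) \<Rightarrow> real)"
  have ind: "indep_var (PiM A (\<lambda>_. borel)) (GA A) (PiM B (\<lambda>_. borel)) (GA B)"
    unfolding GA_def[abs_def] by (rule indep_var_restrict[OF indZ']) (auto simp: A_def B_def)
  have fm: "f \<in> borel_measurable (PiM A (\<lambda>_. borel) \<Otimes>\<^sub>M PiM B (\<lambda>_. borel))"
  proof -
    have 1: "(\<lambda>x. \<Sum>i\<in>I. fst x (Inl i) :: real) \<in> borel_measurable (PiM A (\<lambda>_. borel) \<Otimes>\<^sub>M PiM B (\<lambda>_. borel))"
      by (rule measurable_compose[OF measurable_fst tf_meas]) (simp add: A_def)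
    have 2: "(\<lambda>x j. snd x (Inr (k, j)) :: real) \<in> measurable (PiM A (\<lambda>_. borel) \<Otimes>\<^sub>M PiM B (\<lambda>_. borel)) (PiM UNIV (\<lambda>_. borel))"
      by (rule measurable_compose[OF measurable_snd ysf_meas]) (simp add: B_def)
    show ?thesis unfolding f_def by (rule measurable_compose[OF measurable_Pair[OF 1 2] F])
  qed
  have eq: "F (\<Sum>i\<in>I. X i \<omega>, Ys k \<omega>') = f (GA A \<omega>, GA B \<omega>')" for \<omega> \<omega>'
    by (auto simp: f_def GA_def A_def B_def Ys_def Z_def intro!: arg_cong[where f=F])
  show ?thesis
    unfolding eq using indep_var_nn_integral'[OF ind fm] by simp
qed

definition R :: "nat \<Rightarrow> nat \<Rightarrow> 'a \<Rightarrow> real" where "R k l \<omega> = (\<Sum>i\<in>{k<..l}. X i \<omega>)"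

lemma R_meas[measurable]: "R k l \<in> borel_measurable M"
  unfolding R_def by measurable

lemma T_split: "k \<le> l \<Longrightarrow> T l \<omega> = T k \<omega> + R k l \<omega>"
proof -
  assume "k \<le> l"
  then have "{..l} = {..k} \<union> {k<..l}" by auto
  then show ?thesis unfolding T_def R_def
    by (simp add: sum.union_disjoint ivl_disj_int)
qed

lemma G2:
  assumes kl: "k < l"
  and F: "F \<in> borel_measurable (borel \<Otimes>\<^sub>M PiM UNIV (\<lambda>_. borel))"
  and G: "G \<in> borel_measurable (borel \<Otimes>\<^sub>M PiM UNIV (\<lambda>_. borel))"
  shows "(\<integral>\<^sup>+\<omega>. F (T k \<omega>, Ys k \<omega>) * G (T l \<omega>, Ys l \<omega>) \<partial>M)
       = (\<integral>\<^sup>+\<omega>. F (T k \<omega>, Ys k \<omega>) * (\<integral>\<^sup>+\<omega>'. G (T k \<omega> + R k l \<omega>', Ys l \<omega>') \<partial>M) \<partial>M)"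
proof -
  define A :: "(nat + nat \<times> nat) set" where "A = Inl ` {..k} \<union> range (\<lambda>j. Inr (k, j))"
  define B :: "(nat + nat \<times> nat) set" where "B = Inl ` {k<..l} \<union> range (\<lambda>j. Inr (l, j))"
  define f where "f x = F (\<Sum>i\<in>{..k}. fst x (Inl i), \<lambda>j. fst x (Inr (k, j))) *
      G ((\<Sum>i\<in>{..k}. fst x (Inl i)) + (\<Sum>i\<in>{k<..l}. snd x (Inl i)), \<lambda>j. snd x (Inr (l, j)))"
    for x :: "((nat + nat \<times> nat) \<Rightarrow> real) \<times> ((nat + nat \<times> nat) \<Rightarrow> real)"
  have "A \<inter> B = {}" using kl by (auto simp: A_def B_def)
  then have ind: "indep_var (PiM A (\<lambda>_. borel)) (GA A) (PiM B (\<lambda>_. borel)) (GA B)"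
    unfolding GA_def[abs_def] by (intro indep_var_restrict[OF indZ']) auto
  let ?P = "PiM A (\<lambda>_. borel) \<Otimes>\<^sub>M PiM B (\<lambda>_. borel)"
  have fm: "f \<in> borel_measurable ?P"
  proof -
    have 1: "(\<lambda>x. \<Sum>i\<in>{..k}. fst x (Inl i) :: real) \<in> borel_measurable ?P"
      by (rule measurable_compose[OF measurable_fst tf_meas]) (auto simp: A_def)
    have 2: "(\<lambda>x j. fst x (Inr (k, j)) :: real) \<in> measurable ?P (PiM UNIV (\<lambda>_. borel))"
      by (rule measurable_compose[OF measurable_fst ysf_meas]) (auto simp: A_def)
    have 3: "(\<lambda>x. \<Sum>i\<in>{k<..l}. snd x (Inl i) :: real) \<in> borel_measurable ?P"
      by (rule measurable_compose[OF measurable_snd tf_meas]) (auto simp: B_def)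
    have 4: "(\<lambda>x j. snd x (Inr (l, j)) :: real) \<in> measurable ?P (PiM UNIV (\<lambda>_. borel))"
      by (rule measurable_compose[OF measurable_snd ysf_meas]) (auto simp: B_def)
    have a: "(\<lambda>x. F (\<Sum>i\<in>{..k}. fst x (Inl i), \<lambda>j. fst x (Inr (k, j)))) \<in> borel_measurable ?P"
      by (rule measurable_compose[OF measurable_Pair[OF 1 2] F])
    have b: "(\<lambda>x. G ((\<Sum>i\<in>{..k}. fst x (Inl i)) + (\<Sum>i\<in>{k<..l}. snd x (Inl i)), \<lambda>j. snd x (Inr (l, j)))) \<in> borel_measurable ?P"
      by (rule measurable_compose[OF measurable_Pair[OF borel_measurable_add[OF 1 3] 4] G])
    show ?thesis unfolding f_def using a b by measurable
  qed
  have eq: "F (T k \<omega>, Ys k \<omega>) * G (T k \<omega> + R k l \<omega>', Ys l \<omega>') = f (GA A \<omega>, GA B \<omega>')" for \<omega> \<omega>'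
    by (simp add: f_def GA_def A_def B_def Ys_def Z_def T_def R_def)
  have "(\<integral>\<^sup>+\<omega>. F (T k \<omega>, Ys k \<omega>) * G (T l \<omega>, Ys l \<omega>) \<partial>M) = (\<integral>\<^sup>+\<omega>. f (GA A \<omega>, GA B \<omega>) \<partial>M)"
    using kl by (simp add: eq[symmetric] T_split[of k l])
  also have "\<dots> = (\<integral>\<^sup>+\<omega>. \<integral>\<^sup>+\<omega>'. f (GA A \<omega>, GA B \<omega>') \<partial>M \<partial>M)"
    by (rule indep_var_nn_integral'[OF ind fm])
  also have "\<dots> = (\<integral>\<^sup>+\<omega>. \<integral>\<^sup>+\<omega>'. F (T k \<omega>, Ys k \<omega>) * G (T k \<omega> + R k l \<omega>', Ys l \<omega>') \<partial>M \<partial>M)"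
    by (simp add: eq)
  also have "\<dots> = (\<integral>\<^sup>+\<omega>. F (T k \<omega>, Ys k \<omega>) * (\<integral>\<^sup>+\<omega>'. G (T k \<omega> + R k l \<omega>', Ys l \<omega>') \<partial>M) \<partial>M)"
  proof (rule nn_integral_cong)
    fix \<omega>
    have "(\<lambda>\<omega>'. G (T k \<omega> + R k l \<omega>', Ys l \<omega>')) \<in> borel_measurable M"
      by (rule measurable_compose[OF _ G]) measurable
    then show "(\<integral>\<^sup>+\<omega>'. F (T k \<omega>, Ys k \<omega>) * G (T k \<omega> + R k l \<omega>', Ys l \<omega>') \<partial>M)
        = F (T k \<omega>, Ys k \<omega>) * (\<integral>\<^sup>+\<omega>'. G (T k \<omega> + R k l \<omega>', Ys l \<omega>') \<partial>M)"
      by (rule nn_integral_cmult)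
  qed
  finally show ?thesis .
qed

end

definition ob :: "real \<Rightarrow> real \<Rightarrow> real \<Rightarrow> real \<Rightarrow> real \<times> (nat \<Rightarrow> real) \<Rightarrow> ennreal" where
  "ob u1 v1 u2 v2 x = (if \<exists>n. twoint.inU u1 v1 u2 v2 (fst x + (\<Sum>j<n. snd x j)) then 1 else 0)"

lemma ob_meas: assumes tw: "twoint u1 v1 u2 v2" shows "ob u1 v1 u2 v2 \<in> borel_measurable (borel \<Otimes>\<^sub>M PiM UNIV (\<lambda>_. borel))"
proof -
  have s: "(\<lambda>x. fst x + (\<Sum>j<n. snd x j) :: real) \<in> borel_measurable (borel \<Otimes>\<^sub>M PiM UNIV (\<lambda>_. borel))" for n
  proof -
    have "(\<lambda>y. \<Sum>j<n. y j :: real) \<in> borel_measurable (PiM UNIV (\<lambda>_. borel))"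
      by (rule borel_measurable_sum[of "{..<n}" "\<lambda>j y. y j"]) (rule measurable_component_singleton; simp)
    then show ?thesis by measurable
  qed
  have i: "Measurable.pred borel (twoint.inU u1 v1 u2 v2)"
  proof -
    have "twoint.inU u1 v1 u2 v2 = (\<lambda>s. (u1 < s \<and> s < v1) \<or> (u2 < s \<and> s < v2))"
      using tw by (auto simp: twoint.inU_def fun_eq_iff)
    then show ?thesis by simp
  qed
  show ?thesis unfolding ob_def using s i by measurable
qed

context imm begin

lemma ob_bar:
  assumes tw: "twoint u1 v1 u2 v2"
  shows "(\<integral>\<^sup>+\<omega>. ob u1 v1 u2 v2 (t, Ys k \<omega>) \<partial>M) = ennreal (1 - twoint.q u1 v1 u2 v2 t)"
proof -
  interpret yule M u1 v1 u2 v2 "Y k" by (rule yule_k[OF tw])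
  define A where "A = {\<omega>\<in>space M. \<forall>n. \<not> inU (t + B n \<omega>)}"
  have A: "A \<in> sets M" unfolding A_def by measurable
  have "(\<integral>\<^sup>+\<omega>. ob u1 v1 u2 v2 (t, Ys k \<omega>) \<partial>M) = (\<integral>\<^sup>+\<omega>. indicator (space M - A) \<omega> \<partial>M)"
    by (intro nn_integral_cong) (auto simp: ob_def A_def B_def Ys_def indicator_def)
  also have "\<dots> = ennreal (1 - q t)"
  proof -
    have "prob A = q t"
      using yule_avoid[of t] A q_nonneg[of t] by (simp add: A_def[symmetric] emeasure_eq_measure)
    then show ?thesis using A by (simp add: emeasure_eq_measure prob_compl)
  qed
  finally show ?thesis .
qed

lemma E1:
  assumes tw: "twoint u1 v1 u2 v2"
  shows "(\<integral>\<^sup>+\<omega>. ob u1 v1 u2 v2 (T k \<omega>, Ys k \<omega>) \<partial>M)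
    = (\<integral>\<^sup>+t. ennreal (erlang_density k \<theta> t) * ennreal (1 - twoint.q u1 v1 u2 v2 t) \<partial>lborel)"
proof -
  have "(\<integral>\<^sup>+\<omega>. ob u1 v1 u2 v2 (T k \<omega>, Ys k \<omega>) \<partial>M) = (\<integral>\<^sup>+\<omega>. \<integral>\<^sup>+\<omega>'. ob u1 v1 u2 v2 (T k \<omega>, Ys k \<omega>') \<partial>M \<partial>M)"
    unfolding T_def using G1[OF ob_meas[OF tw], where I="{..k}" and k=k] by (simp add: atMost_def)
  also have "\<dots> = (\<integral>\<^sup>+\<omega>. ennreal (1 - twoint.q u1 v1 u2 v2 (T k \<omega>)) \<partial>M)"
    by (simp add: ob_bar[OF tw])
  also have "\<dots> = (\<integral>\<^sup>+t. ennreal (erlang_density k \<theta> t) * ennreal (1 - twoint.q u1 v1 u2 v2 t) \<partial>lborel)"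
  proof (rule distributed_nn_integral[OF T_distr, symmetric])
    show "(\<lambda>t. ennreal (1 - twoint.q u1 v1 u2 v2 t)) \<in> borel_measurable lborel"
      using twoint.measurable_q[OF tw] by simp
  qed
  finally show ?thesis .
qed

definition Hf :: "real \<Rightarrow> real \<Rightarrow> real \<Rightarrow> real \<Rightarrow> nat \<Rightarrow> real \<Rightarrow> ennreal" where
  "Hf u1 v1 u2 v2 m t = (\<integral>\<^sup>+r. ennreal (erlang_density m \<theta> r) * ennreal (1 - twoint.q u1 v1 u2 v2 (t + r)) \<partial>lborel)"

lemma Hf_meas:
  assumes tw: "twoint u1 v1 u2 v2"
  shows "Hf u1 v1 u2 v2 m \<in> borel_measurable borel"
proof -
  have qm: "twoint.q u1 v1 u2 v2 \<in> borel_measurable borel" by (rule twoint.measurable_q[OF tw])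
  have "(\<lambda>x. ennreal (erlang_density m \<theta> (snd x)) * ennreal (1 - twoint.q u1 v1 u2 v2 (fst x + snd x)))
      \<in> borel_measurable (borel \<Otimes>\<^sub>M lborel)"
    using qm by measurable
  from lborel.borel_measurable_nn_integral_fst[OF this] show ?thesis
    by (simp add: Hf_def[abs_def])
qed

lemma R_distr: "k < l \<Longrightarrow> distributed M lborel (R k l) (erlang_density (l - k - 1) \<theta>)"
  using erlang_sum[of "{k<..l}"] by (simp add: R_def[abs_def])

lemma E2:
  assumes kl: "k < l" and twU: "twoint u1 v1 u2 v2" and twV: "twoint u1' v1' u2' v2'"
  shows "(\<integral>\<^sup>+\<omega>. ob u1 v1 u2 v2 (T k \<omega>, Ys k \<omega>) * ob u1' v1' u2' v2' (T l \<omega>, Ys l \<omega>) \<partial>M)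
    = (\<integral>\<^sup>+t. ennreal (erlang_density k \<theta> t) * (ennreal (1 - twoint.q u1 v1 u2 v2 t) * Hf u1' v1' u2' v2' (l - k - 1) t) \<partial>lborel)"
proof -
  let ?H = "Hf u1' v1' u2' v2' (l - k - 1)"
  have H: "(\<integral>\<^sup>+\<omega>'. ob u1' v1' u2' v2' (t + R k l \<omega>', Ys l \<omega>') \<partial>M) = ?H t" for t
  proof -
    have Fm: "(\<lambda>x. ob u1' v1' u2' v2' (t + fst x, snd x)) \<in> borel_measurable (borel \<Otimes>\<^sub>M PiM UNIV (\<lambda>_. borel))"
      by (rule measurable_compose[OF _ ob_meas[OF twV]]) measurable
    have "(\<integral>\<^sup>+\<omega>'. ob u1' v1' u2' v2' (t + R k l \<omega>', Ys l \<omega>') \<partial>M)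
        = (\<integral>\<^sup>+\<omega>'. \<integral>\<^sup>+\<omega>''. ob u1' v1' u2' v2' (t + R k l \<omega>', Ys l \<omega>'') \<partial>M \<partial>M)"
      using G1[OF Fm, where I="{k<..l}" and k=l] by (simp add: R_def)
    also have "\<dots> = (\<integral>\<^sup>+\<omega>'. ennreal (1 - twoint.q u1' v1' u2' v2' (t + R k l \<omega>')) \<partial>M)"
      by (simp add: ob_bar[OF twV])
    also have "\<dots> = ?H t"
      unfolding Hf_def
    proof (rule distributed_nn_integral[OF R_distr[OF kl], symmetric])
      show "(\<lambda>r. ennreal (1 - twoint.q u1' v1' u2' v2' (t + r))) \<in> borel_measurable lborel"
        using twoint.measurable_q[OF twV] by simp
    qed
    finally show ?thesis .
  qed
  have "(\<integral>\<^sup>+\<omega>. ob u1 v1 u2 v2 (T k \<omega>, Ys k \<omega>) * ob u1' v1' u2' v2' (T l \<omega>, Ys l \<omega>) \<partial>M)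
     = (\<integral>\<^sup>+\<omega>. ob u1 v1 u2 v2 (T k \<omega>, Ys k \<omega>) * ?H (T k \<omega>) \<partial>M)"
    by (simp add: G2[OF kl ob_meas[OF twU] ob_meas[OF twV]] H)
  also have "\<dots> = (\<integral>\<^sup>+\<omega>. \<integral>\<^sup>+\<omega>'. ob u1 v1 u2 v2 (T k \<omega>, Ys k \<omega>') * ?H (T k \<omega>) \<partial>M \<partial>M)"
  proof -
    have Fm: "(\<lambda>x. ob u1 v1 u2 v2 x * ?H (fst x)) \<in> borel_measurable (borel \<Otimes>\<^sub>M PiM UNIV (\<lambda>_. borel))"
      using ob_meas[OF twU] Hf_meas[OF twV] by measurable
    show ?thesis
      unfolding T_def using G1[OF Fm, where I="{..k}" and k=k] by (simp add: atMost_def)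
  qed
  also have "\<dots> = (\<integral>\<^sup>+\<omega>. ennreal (1 - twoint.q u1 v1 u2 v2 (T k \<omega>)) * ?H (T k \<omega>) \<partial>M)"
  proof (rule nn_integral_cong)
    fix \<omega>
    have "(\<integral>\<^sup>+\<omega>'. ob u1 v1 u2 v2 (T k \<omega>, Ys k \<omega>') * ?H (T k \<omega>) \<partial>M)
        = (\<integral>\<^sup>+\<omega>'. ob u1 v1 u2 v2 (T k \<omega>, Ys k \<omega>') \<partial>M) * ?H (T k \<omega>)"
    proof (rule nn_integral_multc)
      show "(\<lambda>\<omega>'. ob u1 v1 u2 v2 (T k \<omega>, Ys k \<omega>')) \<in> borel_measurable M"
        by (rule measurable_compose[OF _ ob_meas[OF twU]]) measurable
    qed
    then show "(\<integral>\<^sup>+\<omega>'. ob u1 v1 u2 v2 (T k \<omega>, Ys k \<omega>') * ?H (T k \<omega>) \<partial>M)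
        = ennreal (1 - twoint.q u1 v1 u2 v2 (T k \<omega>)) * ?H (T k \<omega>)"
      by (simp add: ob_bar[OF twU])
  qed
  also have "\<dots> = (\<integral>\<^sup>+t. ennreal (erlang_density k \<theta> t) * (ennreal (1 - twoint.q u1 v1 u2 v2 t) * ?H t) \<partial>lborel)"
  proof (rule distributed_nn_integral[OF T_distr, symmetric])
    show "(\<lambda>t. ennreal (1 - twoint.q u1 v1 u2 v2 t) * ?H t) \<in> borel_measurable lborel"
      using twoint.measurable_q[OF twU] Hf_meas[OF twV] by simp
  qed
  finally show ?thesis .
qed

end

lemma suminf_swap_ennreal:
  fixes h :: "nat \<Rightarrow> nat \<Rightarrow> ennreal"
  shows "(\<Sum>i. \<Sum>j. h i j) = (\<Sum>j. \<Sum>i. h i j)"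
proof -
  interpret pair_sigma_finite "count_space (UNIV::nat set)" "count_space (UNIV::nat set)"
    by (intro pair_sigma_finite.intro sigma_finite_measure_count_space)
  have m: "case_prod h \<in> borel_measurable (count_space UNIV \<Otimes>\<^sub>M count_space UNIV)"
    by (simp add: pair_measure_countable)
  have "(\<Sum>i. \<Sum>j. h i j) = (\<integral>\<^sup>+i. \<integral>\<^sup>+j. h i j \<partial>count_space UNIV \<partial>count_space UNIV)"
    by (simp add: nn_integral_count_space_nat)
  also have "\<dots> = (\<integral>\<^sup>+j. \<integral>\<^sup>+i. h i j \<partial>count_space UNIV \<partial>count_space UNIV)"
    by (rule Fubini'[OF m, symmetric])
  also have "\<dots> = (\<Sum>j. \<Sum>i. h i j)"
    by (simp add: nn_integral_count_space_nat)
  finally show ?thesis .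
qed

lemma suminf_triangle_ennreal:
  fixes h :: "nat \<Rightarrow> nat \<Rightarrow> ennreal"
  shows "(\<Sum>k. \<Sum>l<k. h k l) = (\<Sum>l. \<Sum>m. h (m + Suc l) l)"
proof -
  have e: "(\<Sum>l<k. h k l) = (\<Sum>l. if l < k then h k l else 0)" for k
    by (subst suminf_finite[of "{..<k}"]) auto
  have "(\<Sum>k. \<Sum>l<k. h k l) = (\<Sum>k. \<Sum>l. if l < k then h k l else 0)"
    by (simp add: e)
  also have "\<dots> = (\<Sum>l. \<Sum>k. if l < k then h k l else 0)"
    by (rule suminf_swap_ennreal)
  also have "\<dots> = (\<Sum>l. \<Sum>m. h (m + Suc l) l)"
  proof (rule suminf_cong)
    fix l
    have "(\<Sum>k. if l < k then h k l else 0) = (\<Sum>m. (\<lambda>k. if l < k then h k l else 0) (m + Suc l)) + (\<Sum>k<Suc l. if l < k then h k l else 0)"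
      by (rule suminf_offset) simp
    then show "(\<Sum>k. if l < k then h k l else 0) = (\<Sum>m. h (m + Suc l) l)" by simp
  qed
  finally show ?thesis .
qed

lemma erlang_sum_dens:
  assumes th: "0 < \<theta>"
  shows "(\<Sum>k. ennreal (erlang_density k \<theta> t)) = ennreal (\<theta> * indicator {0..} t)"
proof (cases "t < 0")
  case True then show ?thesis by (simp add: erlang_density_def)
next
  case False
  have "(\<lambda>k. \<theta> * exp (- \<theta> * t) * ((\<theta> * t) ^ k /\<^sub>R fact k)) sums (\<theta> * exp (- \<theta> * t) * exp (\<theta> * t))"
    by (intro sums_mult exp_converges)
  moreover have "\<theta> * exp (- \<theta> * t) * exp (\<theta> * t) = \<theta>" by (simp add: mult.assoc exp_add[symmetric])
  moreover have "\<theta> * exp (- \<theta> * t) * ((\<theta> * t) ^ k /\<^sub>R fact k) = erlang_density k \<theta> t" for k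
    using False by (simp add: erlang_density_def power_mult_distrib field_simps)
  ultimately have "(\<lambda>k. erlang_density k \<theta> t) sums \<theta>" by (simp only:)
  then have "(\<Sum>k. ennreal (erlang_density k \<theta> t)) = ennreal \<theta>"
    by (rule suminf_ennreal_eq[rotated]) (use th in \<open>auto intro: erlang_density_nonneg\<close>)
  then show ?thesis using False by simp
qed

lemma translate_nn:
  fixes f :: "real \<Rightarrow> ennreal"
  assumes [measurable]: "f \<in> borel_measurable borel"
  shows "(\<integral>\<^sup>+r. f (t + r) \<partial>lborel) = (\<integral>\<^sup>+s. f s \<partial>lborel)"
  using nn_integral_real_affine[of f 1 t] by simp

lemma pred_ge1[measurable]: "Measurable.pred (borel \<Otimes>\<^sub>M borel) (\<lambda>x::real\<times>real. fst x \<in> {snd x..})"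
  unfolding atLeast_iff by measurable
lemma pred_ge2[measurable]: "Measurable.pred (borel \<Otimes>\<^sub>M borel) (\<lambda>x::real\<times>real. snd x \<in> {fst x..})"
  unfolding atLeast_iff by measurable

lemma pred_ge3[measurable]: "Measurable.pred borel (\<lambda>x::real. t \<in> {x..})"
  unfolding atLeast_iff by measurable

lemma nn_int_meas:
  fixes h :: "real \<Rightarrow> real \<Rightarrow> ennreal"
  assumes "case_prod h \<in> borel_measurable (borel \<Otimes>\<^sub>M borel)"
  shows "(\<lambda>t. \<integral>\<^sup>+s. h t s \<partial>lborel) \<in> borel_measurable lborel"
proof -
  have "case_prod h \<in> borel_measurable (lborel \<Otimes>\<^sub>M lborel)"
    using assms by (simp cong: measurable_cong_sets)
  from lborel.borel_measurable_nn_integral_fst[OF this] show ?thesis by simp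
qed

lemma J_lemma:
  fixes f g :: "real \<Rightarrow> ennreal"
  assumes [measurable]: "f \<in> borel_measurable borel" "g \<in> borel_measurable borel"
  shows "(\<integral>\<^sup>+t. f t * indicator {0..} t * (\<integral>\<^sup>+r. g (t + r) * indicator {0..} r \<partial>lborel) \<partial>lborel)
       + (\<integral>\<^sup>+t. g t * indicator {0..} t * (\<integral>\<^sup>+r. f (t + r) * indicator {0..} r \<partial>lborel) \<partial>lborel)
       = (\<integral>\<^sup>+t. f t * indicator {0..} t \<partial>lborel) * (\<integral>\<^sup>+t. g t * indicator {0..} t \<partial>lborel)"
proof -
  define F where "F t = f t * indicator {0..} t" for t
  define G where "G t = g t * indicator {0..} t" for t
  have [measurable]: "F \<in> borel_measurable borel" "G \<in> borel_measurable borel"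
    unfolding F_def G_def by measurable
  have tr: "(\<integral>\<^sup>+r. h (t + r) * indicator {0..} r \<partial>lborel) = (\<integral>\<^sup>+s. H s * indicator {t..} s \<partial>lborel)"
    if "0 \<le> t" "\<And>s. t \<le> s \<Longrightarrow> H s = h s" and [measurable]: "h \<in> borel_measurable borel" "H \<in> borel_measurable borel" for h H :: "real \<Rightarrow> ennreal" and t
  proof -
    have "(\<integral>\<^sup>+r. h (t + r) * indicator {0..} r \<partial>lborel) = (\<integral>\<^sup>+r. (\<lambda>s. H s * indicator {t..} s) (t + r) \<partial>lborel)"
      using that by (intro nn_integral_cong) (auto simp: indicator_def)
    also have "\<dots> = (\<integral>\<^sup>+s. H s * indicator {t..} s \<partial>lborel)"
      by (rule translate_nn) measurable
    finally show ?thesis .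
  qed
  have 1: "(\<integral>\<^sup>+t. f t * indicator {0..} t * (\<integral>\<^sup>+r. g (t + r) * indicator {0..} r \<partial>lborel) \<partial>lborel)
      = (\<integral>\<^sup>+t. \<integral>\<^sup>+s. F t * G s * indicator {t..} s \<partial>lborel \<partial>lborel)"
  proof (rule nn_integral_cong)
    fix t :: real
    show "f t * indicator {0..} t * (\<integral>\<^sup>+r. g (t + r) * indicator {0..} r \<partial>lborel)
      = (\<integral>\<^sup>+s. F t * G s * indicator {t..} s \<partial>lborel)"
    proof (cases "0 \<le> t")
      case True
      have "(\<integral>\<^sup>+r. g (t + r) * indicator {0..} r \<partial>lborel) = (\<integral>\<^sup>+s. G s * indicator {t..} s \<partial>lborel)"
        by (rule tr[OF True]) (use True in \<open>auto simp: G_def\<close>)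
      then show ?thesis
        by (simp add: F_def nn_integral_cmult[symmetric] mult.assoc)
    qed (simp add: F_def)
  qed
  have 2: "(\<integral>\<^sup>+t. g t * indicator {0..} t * (\<integral>\<^sup>+r. f (t + r) * indicator {0..} r \<partial>lborel) \<partial>lborel)
      = (\<integral>\<^sup>+t. \<integral>\<^sup>+s. G t * F s * indicator {t..} s \<partial>lborel \<partial>lborel)"
  proof (rule nn_integral_cong)
    fix t :: real
    show "g t * indicator {0..} t * (\<integral>\<^sup>+r. f (t + r) * indicator {0..} r \<partial>lborel)
      = (\<integral>\<^sup>+s. G t * F s * indicator {t..} s \<partial>lborel)"
    proof (cases "0 \<le> t")
      case True
      have "(\<integral>\<^sup>+r. f (t + r) * indicator {0..} r \<partial>lborel) = (\<integral>\<^sup>+s. F s * indicator {t..} s \<partial>lborel)"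
        by (rule tr[OF True]) (use True in \<open>auto simp: F_def\<close>)
      then show ?thesis
        by (simp add: G_def nn_integral_cmult[symmetric] mult.assoc)
    qed (simp add: G_def)
  qed
  have 3: "(\<integral>\<^sup>+t. \<integral>\<^sup>+s. G t * F s * indicator {t..} s \<partial>lborel \<partial>lborel)
         = (\<integral>\<^sup>+t. \<integral>\<^sup>+s. F t * G s * indicator {s..} t \<partial>lborel \<partial>lborel)"
  proof -
    have "(\<integral>\<^sup>+t. \<integral>\<^sup>+s. G t * F s * indicator {t..} s \<partial>lborel \<partial>lborel)
        = (\<integral>\<^sup>+s. \<integral>\<^sup>+t. G t * F s * indicator {t..} s \<partial>lborel \<partial>lborel)"
      using lborel_pair.Fubini'[where f="\<lambda>s t. G t * F s * indicator {t..} s"] by measurable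
    also have "\<dots> = (\<integral>\<^sup>+t. \<integral>\<^sup>+s. F t * G s * indicator {s..} t \<partial>lborel \<partial>lborel)"
      by (simp add: mult_ac)
    finally show ?thesis .
  qed
  have "(\<integral>\<^sup>+t. \<integral>\<^sup>+s. F t * G s * indicator {t..} s \<partial>lborel \<partial>lborel)
      + (\<integral>\<^sup>+t. \<integral>\<^sup>+s. F t * G s * indicator {s..} t \<partial>lborel \<partial>lborel)
      = (\<integral>\<^sup>+t. (\<integral>\<^sup>+s. F t * G s * indicator {t..} s \<partial>lborel) + (\<integral>\<^sup>+s. F t * G s * indicator {s..} t \<partial>lborel) \<partial>lborel)"
    by (rule nn_integral_add[symmetric]; rule nn_int_meas; measurable)
  also have "\<dots> = (\<integral>\<^sup>+t. \<integral>\<^sup>+s. F t * G s \<partial>lborel \<partial>lborel)"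
  proof (rule nn_integral_cong)
    fix t :: real
    have "(\<integral>\<^sup>+s. F t * G s * indicator {t..} s \<partial>lborel) + (\<integral>\<^sup>+s. F t * G s * indicator {s..} t \<partial>lborel)
        = (\<integral>\<^sup>+s. F t * G s * indicator {t..} s + F t * G s * indicator {s..} t \<partial>lborel)"
      by (rule nn_integral_add[symmetric]) measurable
    also have "\<dots> = (\<integral>\<^sup>+s. F t * G s \<partial>lborel)"
      by (rule nn_integral_cong_AE, use AE_lborel_singleton[of t] in eventually_elim)
         (auto simp: indicator_def)
    finally show "(\<integral>\<^sup>+s. F t * G s * indicator {t..} s \<partial>lborel) + (\<integral>\<^sup>+s. F t * G s * indicator {s..} t \<partial>lborel)
        = (\<integral>\<^sup>+s. F t * G s \<partial>lborel)" .
  qed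
  also have "\<dots> = (\<integral>\<^sup>+t. F t \<partial>lborel) * (\<integral>\<^sup>+s. G s \<partial>lborel)"
    by (simp add: nn_integral_cmult nn_integral_multc)
  finally show ?thesis using 1 2 3 by (simp add: F_def G_def)
qed

context imm begin

definition NN :: "real \<Rightarrow> real \<Rightarrow> real \<Rightarrow> real \<Rightarrow> 'a \<Rightarrow> ennreal" where
  "NN u1 v1 u2 v2 \<omega> = (\<Sum>k. ob u1 v1 u2 v2 (T k \<omega>, Ys k \<omega>))"

lemma ob_k_meas:
  assumes tw: "twoint u1 v1 u2 v2"
  shows "(\<lambda>\<omega>. ob u1 v1 u2 v2 (T k \<omega>, Ys k \<omega>)) \<in> borel_measurable M"
  by (rule measurable_compose[OF _ ob_meas[OF tw]]) measurable

lemma NN_meas: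
  assumes tw: "twoint u1 v1 u2 v2"
  shows "NN u1 v1 u2 v2 \<in> borel_measurable M"
  unfolding NN_def[abs_def] using ob_k_meas[OF tw] by measurable

definition PP :: "real \<Rightarrow> real \<Rightarrow> real \<Rightarrow> real \<Rightarrow> real \<Rightarrow> ennreal" where
  "PP u1 v1 u2 v2 t = ennreal (1 - twoint.q u1 v1 u2 v2 t)"

lemma PP_meas:
  assumes tw: "twoint u1 v1 u2 v2"
  shows "PP u1 v1 u2 v2 \<in> borel_measurable borel"
  unfolding PP_def[abs_def] using twoint.measurable_q[OF tw] by measurable

lemma sum_erl_mult:
  assumes "f \<in> borel_measurable borel"
  shows "(\<Sum>k. \<integral>\<^sup>+t. ennreal (erlang_density k \<theta> t) * f t \<partial>lborel) = ennreal \<theta> * (\<integral>\<^sup>+t. f t * indicator {0..} t \<partial>lborel)"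
proof -
  have "(\<Sum>k. \<integral>\<^sup>+t. ennreal (erlang_density k \<theta> t) * f t \<partial>lborel) = (\<integral>\<^sup>+t. (\<Sum>k. ennreal (erlang_density k \<theta> t) * f t) \<partial>lborel)"
    by (rule nn_integral_suminf[symmetric]) (use assms in measurable)
  also have "\<dots> = (\<integral>\<^sup>+t. ennreal \<theta> * (f t * indicator {0..} t) \<partial>lborel)"
  proof (rule nn_integral_cong)
    fix t :: real
    have "(\<Sum>k. ennreal (erlang_density k \<theta> t) * f t) = (\<Sum>k. ennreal (erlang_density k \<theta> t)) * f t"
      by (rule ennreal_suminf_multc)
    also have "\<dots> = ennreal (\<theta> * indicator {0..} t) * f t"
      by (simp only: erlang_sum_dens[OF theta])
    also have "\<dots> = ennreal \<theta> * (f t * indicator {0..} t)"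
      by (auto simp: indicator_def mult_ac)
    finally show "(\<Sum>k. ennreal (erlang_density k \<theta> t) * f t) = ennreal \<theta> * (f t * indicator {0..} t)" .
  qed
  also have "\<dots> = ennreal \<theta> * (\<integral>\<^sup>+t. f t * indicator {0..} t \<partial>lborel)"
    by (rule nn_integral_cmult) (use assms in measurable)
  finally show ?thesis .
qed

lemma EN:
  assumes tw: "twoint u1 v1 u2 v2"
  shows "(\<integral>\<^sup>+\<omega>. NN u1 v1 u2 v2 \<omega> \<partial>M) = ennreal \<theta> * ennreal (ln (1 + twoint.L u1 v1 u2 v2 0))"
proof -
  have "(\<integral>\<^sup>+\<omega>. NN u1 v1 u2 v2 \<omega> \<partial>M) = (\<Sum>k. \<integral>\<^sup>+\<omega>. ob u1 v1 u2 v2 (T k \<omega>, Ys k \<omega>) \<partial>M)"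
    unfolding NN_def by (rule nn_integral_suminf) (rule ob_k_meas[OF tw])
  also have "\<dots> = (\<Sum>k. \<integral>\<^sup>+t. ennreal (erlang_density k \<theta> t) * PP u1 v1 u2 v2 t \<partial>lborel)"
    by (simp add: E1[OF tw] PP_def)
  also have "\<dots> = ennreal \<theta> * (\<integral>\<^sup>+t. PP u1 v1 u2 v2 t * indicator {0..} t \<partial>lborel)"
    by (rule sum_erl_mult[OF PP_meas[OF tw]])
  also have "(\<integral>\<^sup>+t. PP u1 v1 u2 v2 t * indicator {0..} t \<partial>lborel) = ennreal (ln (1 + twoint.L u1 v1 u2 v2 0))"
    unfolding PP_def by (rule twoint.integral_one_minus_q[OF tw])
  finally show ?thesis .
qed

definition cross where
  "cross u1 v1 u2 v2 u1' v1' u2' v2' = (\<Sum>k. \<Sum>m. \<integral>\<^sup>+\<omega>. ob u1 v1 u2 v2 (T k \<omega>, Ys k \<omega>) * ob u1' v1' u2' v2' (T (m + Suc k) \<omega>, Ys (m + Suc k) \<omega>) \<partial>M)"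

lemma cross_eq:
  assumes twU: "twoint u1 v1 u2 v2" and twV: "twoint u1' v1' u2' v2'"
  shows "cross u1 v1 u2 v2 u1' v1' u2' v2' = ennreal \<theta> * ennreal \<theta> *
    (\<integral>\<^sup>+t. PP u1 v1 u2 v2 t * indicator {0..} t * (\<integral>\<^sup>+r. PP u1' v1' u2' v2' (t + r) * indicator {0..} r \<partial>lborel) \<partial>lborel)"
proof -
  let ?PU = "PP u1 v1 u2 v2" and ?PV = "PP u1' v1' u2' v2'"
  have PUm: "?PU \<in> borel_measurable borel" by (rule PP_meas[OF twU])
  have PVm: "?PV \<in> borel_measurable borel" by (rule PP_meas[OF twV])
  have HS: "(\<Sum>m. Hf u1' v1' u2' v2' m t) = ennreal \<theta> * (\<integral>\<^sup>+r. ?PV (t + r) * indicator {0..} r \<partial>lborel)" for t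
    unfolding Hf_def PP_def[symmetric]
    by (rule sum_erl_mult) (use PVm in measurable)
  have "cross u1 v1 u2 v2 u1' v1' u2' v2' = (\<Sum>k. \<Sum>m. \<integral>\<^sup>+t. ennreal (erlang_density k \<theta> t) * (?PU t * Hf u1' v1' u2' v2' m t) \<partial>lborel)"
    unfolding cross_def by (simp add: E2[OF _ twU twV] PP_def)
  also have "\<dots> = (\<Sum>k. \<integral>\<^sup>+t. ennreal (erlang_density k \<theta> t) * (?PU t * (\<Sum>m. Hf u1' v1' u2' v2' m t)) \<partial>lborel)"
  proof (rule suminf_cong)
    fix k
    show "(\<Sum>m. \<integral>\<^sup>+t. ennreal (erlang_density k \<theta> t) * (?PU t * Hf u1' v1' u2' v2' m t) \<partial>lborel)
        = (\<integral>\<^sup>+t. ennreal (erlang_density k \<theta> t) * (?PU t * (\<Sum>m. Hf u1' v1' u2' v2' m t)) \<partial>lborel)"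
      by (subst nn_integral_suminf[symmetric]) (use PUm Hf_meas[OF twV] in \<open>auto simp: ennreal_suminf_cmult\<close>)
  qed
  also have "\<dots> = ennreal \<theta> * (\<integral>\<^sup>+t. (?PU t * (\<Sum>m. Hf u1' v1' u2' v2' m t)) * indicator {0..} t \<partial>lborel)"
  proof (rule sum_erl_mult)
    have "(\<lambda>t. \<Sum>m. Hf u1' v1' u2' v2' m t) \<in> borel_measurable borel"
      using Hf_meas[OF twV] by measurable
    then show "(\<lambda>t. ?PU t * (\<Sum>m. Hf u1' v1' u2' v2' m t)) \<in> borel_measurable borel"
      using PUm by measurable
  qed
  also have "\<dots> = ennreal \<theta> * (\<integral>\<^sup>+t. ennreal \<theta> * (?PU t * indicator {0..} t * (\<integral>\<^sup>+r. ?PV (t + r) * indicator {0..} r \<partial>lborel)) \<partial>lborel)"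
    by (simp add: HS mult_ac)
  also have "\<dots> = ennreal \<theta> * (ennreal \<theta> * (\<integral>\<^sup>+t. ?PU t * indicator {0..} t * (\<integral>\<^sup>+r. ?PV (t + r) * indicator {0..} r \<partial>lborel) \<partial>lborel))"
  proof -
    have "(\<lambda>t. \<integral>\<^sup>+r. ?PV (t + r) * indicator {0..} r \<partial>lborel) \<in> borel_measurable lborel"
      by (rule nn_int_meas) (use PVm in measurable)
    then show ?thesis using PUm by (subst nn_integral_cmult) (auto)
  qed
  finally show ?thesis by (simp add: mult_ac)
qed

lemma cross_sum:
  assumes twU: "twoint u1 v1 u2 v2" and twV: "twoint u1' v1' u2' v2'"
  shows "cross u1 v1 u2 v2 u1' v1' u2' v2' + cross u1' v1' u2' v2' u1 v1 u2 v2
     = (\<integral>\<^sup>+\<omega>. NN u1 v1 u2 v2 \<omega> \<partial>M) * (\<integral>\<^sup>+\<omega>. NN u1' v1' u2' v2' \<omega> \<partial>M)"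
proof -
  let ?PU = "PP u1 v1 u2 v2" and ?PV = "PP u1' v1' u2' v2'"
  have "cross u1 v1 u2 v2 u1' v1' u2' v2' + cross u1' v1' u2' v2' u1 v1 u2 v2
     = ennreal \<theta> * ennreal \<theta> * ((\<integral>\<^sup>+t. ?PU t * indicator {0..} t \<partial>lborel) * (\<integral>\<^sup>+t. ?PV t * indicator {0..} t \<partial>lborel))"
    by (simp add: cross_eq[OF twU twV] cross_eq[OF twV twU] distrib_left[symmetric]
        J_lemma[OF PP_meas[OF twU] PP_meas[OF twV]])
  also have "\<dots> = (ennreal \<theta> * (\<integral>\<^sup>+t. ?PU t * indicator {0..} t \<partial>lborel)) * (ennreal \<theta> * (\<integral>\<^sup>+t. ?PV t * indicator {0..} t \<partial>lborel))"
    by (simp add: mult_ac)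
  also have "\<dots> = (\<integral>\<^sup>+\<omega>. NN u1 v1 u2 v2 \<omega> \<partial>M) * (\<integral>\<^sup>+\<omega>. NN u1' v1' u2' v2' \<omega> \<partial>M)"
    by (simp add: EN[OF twU] EN[OF twV] PP_def twoint.integral_one_minus_q[OF twU] twoint.integral_one_minus_q[OF twV])
  finally show ?thesis .
qed

end

context imm begin

lemma EN_prod:
  assumes twU: "twoint u1 v1 u2 v2" and twV: "twoint u1' v1' u2' v2'"
  shows "(\<integral>\<^sup>+\<omega>. NN u1 v1 u2 v2 \<omega> * NN u1' v1' u2' v2' \<omega> \<partial>M)
     = cross u1 v1 u2 v2 u1' v1' u2' v2' + cross u1' v1' u2' v2' u1 v1 u2 v2
       + (\<Sum>k. \<integral>\<^sup>+\<omega>. ob u1 v1 u2 v2 (T k \<omega>, Ys k \<omega>) * ob u1' v1' u2' v2' (T k \<omega>, Ys k \<omega>) \<partial>M)"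
proof -
  define a where "a k \<omega> = ob u1 v1 u2 v2 (T k \<omega>, Ys k \<omega>)" for k \<omega>
  define b where "b k \<omega> = ob u1' v1' u2' v2' (T k \<omega>, Ys k \<omega>)" for k \<omega>
  have am[measurable]: "a k \<in> borel_measurable M" for k unfolding a_def[abs_def] by (rule ob_k_meas[OF twU])
  have bm[measurable]: "b k \<in> borel_measurable M" for k unfolding b_def[abs_def] by (rule ob_k_meas[OF twV])
  define g where "g k l = (\<integral>\<^sup>+\<omega>. a k \<omega> * b l \<omega> \<partial>M)" for k l
  have "(\<integral>\<^sup>+\<omega>. NN u1 v1 u2 v2 \<omega> * NN u1' v1' u2' v2' \<omega> \<partial>M) = (\<integral>\<^sup>+\<omega>. (\<Sum>k. \<Sum>l. a k \<omega> * b l \<omega>) \<partial>M)"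
  proof -
    have pw: "(\<Sum>k. a k \<omega>) * (\<Sum>l. b l \<omega>) = (\<Sum>k. \<Sum>l. a k \<omega> * b l \<omega>)" for \<omega>
      by (simp only: ennreal_suminf_multc[symmetric] ennreal_suminf_cmult[symmetric]) (rule suminf_swap_ennreal)
    show ?thesis unfolding NN_def a_def[symmetric] b_def[symmetric] pw ..
  qed
  also have "\<dots> = (\<Sum>k. \<integral>\<^sup>+\<omega>. (\<Sum>l. a k \<omega> * b l \<omega>) \<partial>M)"
    by (rule nn_integral_suminf) measurable
  also have "\<dots> = (\<Sum>k. \<Sum>l. g k l)"
    unfolding g_def by (intro suminf_cong nn_integral_suminf) measurable
  also have "\<dots> = (\<Sum>k. (\<Sum>m. g k (m + Suc k)) + ((\<Sum>l<k. g k l) + g k k))"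
  proof (rule suminf_cong)
    fix k
    have "(\<Sum>l. g k l) = (\<Sum>m. g k (m + Suc k)) + (\<Sum>l<Suc k. g k l)"
      by (rule suminf_offset) simp
    then show "(\<Sum>l. g k l) = (\<Sum>m. g k (m + Suc k)) + ((\<Sum>l<k. g k l) + g k k)"
      by simp
  qed
  also have "\<dots> = (\<Sum>k. \<Sum>m. g k (m + Suc k)) + ((\<Sum>k. \<Sum>l<k. g k l) + (\<Sum>k. g k k))"
    by (simp only: suminf_add[OF summableI summableI])
  also have "(\<Sum>k. \<Sum>l<k. g k l) = (\<Sum>l. \<Sum>m. g (m + Suc l) l)"
    by (rule suminf_triangle_ennreal)
  also have "(\<Sum>l. \<Sum>m. g (m + Suc l) l) = cross u1' v1' u2' v2' u1 v1 u2 v2"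
    by (simp add: cross_def g_def a_def b_def mult.commute)
  also have "(\<Sum>k. \<Sum>m. g k (m + Suc k)) = cross u1 v1 u2 v2 u1' v1' u2' v2'"
    by (simp add: cross_def g_def a_def b_def)
  finally show ?thesis by (simp add: g_def a_def b_def add.assoc)
qed

end

lemma count_suminf:
  "(\<Sum>k. (if P k then 1 else 0 :: ennreal)) = (if finite {k. P k} then of_nat (card {k. P k}) else \<infinity>)"
proof -
  have "(\<Sum>k. (if P k then 1 else 0 :: ennreal)) = (\<integral>\<^sup>+k. indicator {k. P k} k \<partial>count_space UNIV)"
    by (subst nn_integral_count_space_nat) (auto intro!: suminf_cong split: split_indicator)
  also have "\<dots> = emeasure (count_space UNIV) {k. P k}" by simp
  also have "\<dots> = (if finite {k. P k} then of_nat (card {k. P k}) else \<infinity>)"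
    by (rule emeasure_count_space) simp
  finally show ?thesis .
qed

lemma enn2real_count: "enn2real (if finite A then of_nat (card A) else \<infinity>) = real (card A)"
  by auto

locale imm4 = imm +
  fixes a b c d :: real
  assumes a0: "0 \<le> a" and ab: "a < b" and bc: "b \<le> c" and cd: "c < d"
begin

lemma twA: "twoint a b b b" using ab by unfold_locales auto
lemma twB: "twoint c d d d" using cd by unfold_locales auto
lemma twAB: "twoint a b c d" using ab bc cd by unfold_locales auto

lemma inUA: "twoint.inU a b b b s \<longleftrightarrow> a < s \<and> s < b"
  unfolding twoint.inU_def[OF twA] by linarith
lemma inUB: "twoint.inU c d d d s \<longleftrightarrow> c < s \<and> s < d"
  unfolding twoint.inU_def[OF twB] by linarith
lemma inUAB: "twoint.inU a b c d s \<longleftrightarrow> twoint.inU a b b b s \<or> twoint.inU c d d d s"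
  unfolding twoint.inU_def[OF twAB] inUA inUB by (rule refl)

lemma LA: "twoint.L a b b b 0 = exp b - exp a"
  using a0 ab by (simp add: twoint.L_def[OF twA] ell_def)
lemma LB: "twoint.L c d d d 0 = exp d - exp c"
  using a0 ab bc cd by (simp add: twoint.L_def[OF twB] ell_def)
lemma LAB: "twoint.L a b c d 0 = exp b - exp a + (exp d - exp c)"
  using a0 ab bc cd by (simp add: twoint.L_def[OF twAB] ell_def)

lemma ob_id: "ob a b b b x * ob c d d d x + ob a b c d x = ob a b b b x + ob c d d d x"
  by (auto simp: ob_def inUAB)

lemma obs_eq: "observable_families X Y a b \<omega> = enn2real (NN a b b b \<omega>)"
proof -
  have "NN a b b b \<omega> = (\<Sum>k. (if (\<exists>n. a < family_birth X Y k n \<omega> \<and> family_birth X Y k n \<omega> < b) then 1 else 0 :: ennreal))"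
    by (simp add: NN_def ob_def inUA family_birth_eq Ys_def)
  then show ?thesis
    unfolding observable_families_def by (simp only: count_suminf enn2real_count)
qed

lemma obs_eq2: "observable_families X Y c d \<omega> = enn2real (NN c d d d \<omega>)"
proof -
  have "NN c d d d \<omega> = (\<Sum>k. (if (\<exists>n. c < family_birth X Y k n \<omega> \<and> family_birth X Y k n \<omega> < d) then 1 else 0 :: ennreal))"
    by (simp add: NN_def ob_def inUB family_birth_eq Ys_def)
  then show ?thesis
    unfolding observable_families_def by (simp only: count_suminf enn2real_count)
qed

lemma EN_sum:
  assumes tw: "twoint u1 v1 u2 v2"
  shows "(\<integral>\<^sup>+\<omega>. NN u1 v1 u2 v2 \<omega> \<partial>M) = (\<Sum>k. \<integral>\<^sup>+\<omega>. ob u1 v1 u2 v2 (T k \<omega>, Ys k \<omega>) \<partial>M)"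
  unfolding NN_def by (rule nn_integral_suminf) (rule ob_k_meas[OF tw])

lemma diag:
  "(\<Sum>k. \<integral>\<^sup>+\<omega>. ob a b b b (T k \<omega>, Ys k \<omega>) * ob c d d d (T k \<omega>, Ys k \<omega>) \<partial>M) + (\<integral>\<^sup>+\<omega>. NN a b c d \<omega> \<partial>M)
   = (\<integral>\<^sup>+\<omega>. NN a b b b \<omega> \<partial>M) + (\<integral>\<^sup>+\<omega>. NN c d d d \<omega> \<partial>M)"
proof -
  note mA = ob_k_meas[OF twA] and mB = ob_k_meas[OF twB] and mAB = ob_k_meas[OF twAB]
  have "(\<Sum>k. \<integral>\<^sup>+\<omega>. ob a b b b (T k \<omega>, Ys k \<omega>) * ob c d d d (T k \<omega>, Ys k \<omega>) \<partial>M) + (\<integral>\<^sup>+\<omega>. NN a b c d \<omega> \<partial>M)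
      = (\<Sum>k. (\<integral>\<^sup>+\<omega>. ob a b b b (T k \<omega>, Ys k \<omega>) * ob c d d d (T k \<omega>, Ys k \<omega>) \<partial>M) + (\<integral>\<^sup>+\<omega>. ob a b c d (T k \<omega>, Ys k \<omega>) \<partial>M))"
    by (simp only: EN_sum[OF twAB] suminf_add[OF summableI summableI])
  also have "\<dots> = (\<Sum>k. (\<integral>\<^sup>+\<omega>. ob a b b b (T k \<omega>, Ys k \<omega>) \<partial>M) + (\<integral>\<^sup>+\<omega>. ob c d d d (T k \<omega>, Ys k \<omega>) \<partial>M))"
  proof (rule suminf_cong)
    fix k
    have "(\<integral>\<^sup>+\<omega>. ob a b b b (T k \<omega>, Ys k \<omega>) * ob c d d d (T k \<omega>, Ys k \<omega>) \<partial>M) + (\<integral>\<^sup>+\<omega>. ob a b c d (T k \<omega>, Ys k \<omega>) \<partial>M)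
        = (\<integral>\<^sup>+\<omega>. ob a b b b (T k \<omega>, Ys k \<omega>) * ob c d d d (T k \<omega>, Ys k \<omega>) + ob a b c d (T k \<omega>, Ys k \<omega>) \<partial>M)"
      by (rule nn_integral_add[symmetric]) (use mA mB mAB in measurable)
    also have "\<dots> = (\<integral>\<^sup>+\<omega>. ob a b b b (T k \<omega>, Ys k \<omega>) + ob c d d d (T k \<omega>, Ys k \<omega>) \<partial>M)"
      by (simp only: ob_id)
    also have "\<dots> = (\<integral>\<^sup>+\<omega>. ob a b b b (T k \<omega>, Ys k \<omega>) \<partial>M) + (\<integral>\<^sup>+\<omega>. ob c d d d (T k \<omega>, Ys k \<omega>) \<partial>M)"
      by (rule nn_integral_add) (use mA mB in measurable)
    finally show "(\<integral>\<^sup>+\<omega>. ob a b b b (T k \<omega>, Ys k \<omega>) * ob c d d d (T k \<omega>, Ys k \<omega>) \<partial>M) + (\<integral>\<^sup>+\<omega>. ob a b c d (T k \<omega>, Ys k \<omega>) \<partial>M)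
       = (\<integral>\<^sup>+\<omega>. ob a b b b (T k \<omega>, Ys k \<omega>) \<partial>M) + (\<integral>\<^sup>+\<omega>. ob c d d d (T k \<omega>, Ys k \<omega>) \<partial>M)" .
  qed
  also have "\<dots> = (\<integral>\<^sup>+\<omega>. NN a b b b \<omega> \<partial>M) + (\<integral>\<^sup>+\<omega>. NN c d d d \<omega> \<partial>M)"
    by (simp only: EN_sum[OF twA] EN_sum[OF twB] suminf_add[OF summableI summableI])
  finally show ?thesis .
qed

end

context imm4 begin

definition "eA = \<theta> * ln (1 + (exp b - exp a))"
definition "eB = \<theta> * ln (1 + (exp d - exp c))"
definition "eAB = \<theta> * ln (1 + (exp b - exp a + (exp d - exp c)))"

lemma KA: "0 < exp b - exp a" using ab by simp
lemma KB: "0 < exp d - exp c" using cd by simp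

lemma eA_nn: "0 \<le> eA" using KA theta by (simp add: eA_def)
lemma eB_nn: "0 \<le> eB" using KB theta by (simp add: eB_def)
lemma eAB_nn: "0 \<le> eAB" using KA KB theta by (simp add: eAB_def)

lemma ENA: "(\<integral>\<^sup>+\<omega>. NN a b b b \<omega> \<partial>M) = ennreal eA"
  using EN[OF twA] theta by (simp add: LA eA_def ennreal_mult'[symmetric])
lemma ENB: "(\<integral>\<^sup>+\<omega>. NN c d d d \<omega> \<partial>M) = ennreal eB"
  using EN[OF twB] theta by (simp add: LB eB_def ennreal_mult'[symmetric])
lemma ENAB: "(\<integral>\<^sup>+\<omega>. NN a b c d \<omega> \<partial>M) = ennreal eAB"
  using EN[OF twAB] theta by (simp add: LAB eAB_def ennreal_mult'[symmetric])

definition "Dg = (\<Sum>k. \<integral>\<^sup>+\<omega>. ob a b b b (T k \<omega>, Ys k \<omega>) * ob c d d d (T k \<omega>, Ys k \<omega>) \<partial>M)"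

lemma Dg_eq: "Dg = ennreal (eA + eB - eAB)"
proof -
  have 1: "Dg + ennreal eAB = ennreal eA + ennreal eB"
    using diag by (simp add: Dg_def ENA ENB ENAB)
  have "Dg \<noteq> \<infinity>"
  proof
    assume "Dg = \<infinity>"
    with 1 have "ennreal eA + ennreal eB = \<infinity>" by simp
    then show False by simp
  qed
  then obtain r where r: "Dg = ennreal r" "0 \<le> r" by (cases Dg rule: ennreal_cases) auto
  with 1 have "ennreal (r + eAB) = ennreal (eA + eB)"
    using eA_nn eB_nn eAB_nn by (simp add: ennreal_plus[symmetric] del: ennreal_plus)
  then have "r + eAB = eA + eB"
    using r eA_nn eB_nn eAB_nn by (subst (asm) ennreal_inj) auto
  then show ?thesis using r by simp
qed

lemma Dr_nn: "0 \<le> eA + eB - eAB"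
proof -
  have "ennreal (eA + eB - eAB) + ennreal eAB = ennreal eA + ennreal eB"
    using diag by (simp add: Dg_def[symmetric] Dg_eq ENA ENB ENAB)
  show ?thesis
  proof (rule ccontr)
    assume "\<not> 0 \<le> eA + eB - eAB"
    with \<open>ennreal (eA + eB - eAB) + ennreal eAB = ennreal eA + ennreal eB\<close> have "ennreal eAB = ennreal eA + ennreal eB"
      by (simp add: ennreal_neg)
    then have "eAB = eA + eB" using eA_nn eB_nn eAB_nn
      by (simp add: ennreal_plus[symmetric] del: ennreal_plus)
    with \<open>\<not> 0 \<le> eA + eB - eAB\<close> show False by simp
  qed
qed

lemma ENprod: "(\<integral>\<^sup>+\<omega>. NN a b b b \<omega> * NN c d d d \<omega> \<partial>M) = ennreal (eA * eB + (eA + eB - eAB))"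
  using eA_nn eB_nn Dr_nn
  by (simp add: EN_prod[OF twA twB] cross_sum[OF twA twB] Dg_def[symmetric] Dg_eq ENA ENB
       ennreal_mult'[symmetric] ennreal_plus[symmetric] del: ennreal_plus)

definition "SA \<omega> = enn2real (NN a b b b \<omega>)"
definition "SB \<omega> = enn2real (NN c d d d \<omega>)"

lemma SA_meas[measurable]: "SA \<in> borel_measurable M"
  unfolding SA_def[abs_def] using NN_meas[OF twA] by measurable
lemma SB_meas[measurable]: "SB \<in> borel_measurable M"
  unfolding SB_def[abs_def] using NN_meas[OF twB] by measurable

lemma AE_A: "AE \<omega> in M. ennreal (SA \<omega>) = NN a b b b \<omega>"
proof -
  have "AE \<omega> in M. NN a b b b \<omega> \<noteq> \<infinity>"
    by (rule nn_integral_noteq_infinite[OF NN_meas[OF twA]]) (simp add: ENA)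
  then show ?thesis by eventually_elim (simp add: SA_def less_top)
qed
lemma AE_B: "AE \<omega> in M. ennreal (SB \<omega>) = NN c d d d \<omega>"
proof -
  have "AE \<omega> in M. NN c d d d \<omega> \<noteq> \<infinity>"
    by (rule nn_integral_noteq_infinite[OF NN_meas[OF twB]]) (simp add: ENB)
  then show ?thesis by eventually_elim (simp add: SB_def less_top)
qed

lemma intA: "integrable M SA \<and> integral\<^sup>L M SA = eA"
proof -
  have "(\<integral>\<^sup>+\<omega>. ennreal (SA \<omega>) \<partial>M) = ennreal eA"
    using AE_A by (subst nn_integral_cong_AE[where v="NN a b b b"]) (auto simp: ENA)
  then show ?thesis using eA_nn by (subst (asm) nn_integral_eq_integrable) (auto simp: SA_def)
qed
lemma intB: "integrable M SB \<and> integral\<^sup>L M SB = eB"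
proof -
  have "(\<integral>\<^sup>+\<omega>. ennreal (SB \<omega>) \<partial>M) = ennreal eB"
    using AE_B by (subst nn_integral_cong_AE[where v="NN c d d d"]) (auto simp: ENB)
  then show ?thesis using eB_nn by (subst (asm) nn_integral_eq_integrable) (auto simp: SB_def)
qed
lemma intAB: "integrable M (\<lambda>\<omega>. SA \<omega> * SB \<omega>) \<and> integral\<^sup>L M (\<lambda>\<omega>. SA \<omega> * SB \<omega>) = eA * eB + (eA + eB - eAB)"
proof -
  have "AE \<omega> in M. ennreal (SA \<omega> * SB \<omega>) = NN a b b b \<omega> * NN c d d d \<omega>"
    using AE_A AE_B by eventually_elim (simp add: ennreal_mult SA_def SB_def)
  then have H: "(\<integral>\<^sup>+\<omega>. ennreal (SA \<omega> * SB \<omega>) \<partial>M) = ennreal (eA * eB + (eA + eB - eAB))"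
    by (subst nn_integral_cong_AE[where v="\<lambda>\<omega>. NN a b b b \<omega> * NN c d d d \<omega>"]) (auto simp: ENprod)
  have m: "(\<lambda>\<omega>. SA \<omega> * SB \<omega>) \<in> borel_measurable M" by measurable
  have nn: "AE \<omega> in M. 0 \<le> SA \<omega> * SB \<omega>" by (simp add: SA_def SB_def)
  have V: "0 \<le> eA * eB + (eA + eB - eAB)" using eA_nn eB_nn Dr_nn by simp
  show ?thesis using nn_integral_eq_integrable[OF m nn V] H by blast
qed

lemma cov_value: "covariance SA SB = eA + eB - eAB"
proof -
  have iA: "integrable M SA" and EA: "expectation SA = eA" using intA by auto
  have iB: "integrable M SB" and EB: "expectation SB = eB" using intB by auto
  have iAB: "integrable M (\<lambda>\<omega>. SA \<omega> * SB \<omega>)" and EAB: "expectation (\<lambda>\<omega>. SA \<omega> * SB \<omega>) = eA * eB + (eA + eB - eAB)"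
    using intAB by auto
  have "(\<lambda>\<omega>. (SA \<omega> - eA) * (SB \<omega> - eB)) = (\<lambda>\<omega>. (SA \<omega> * SB \<omega> - eB * SA \<omega>) - (eA * SB \<omega> - eA * eB))"
    by (simp add: fun_eq_iff algebra_simps)
  then have "covariance SA SB = expectation (\<lambda>\<omega>. (SA \<omega> * SB \<omega> - eB * SA \<omega>) - (eA * SB \<omega> - eA * eB))"
    by (simp add: covariance_def EA EB)
  also have "\<dots> = (expectation (\<lambda>\<omega>. SA \<omega> * SB \<omega>) - eB * expectation SA) - (eA * expectation SB - eA * eB)"
    using iA iB iAB by (simp add: prob_space)
  also have "\<dots> = eA + eB - eAB" by (simp add: EA EB EAB)
  finally show ?thesis .
qed

lemma final:
  "covariance (observable_families X Y a b) (observable_families X Y c d)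
     = \<theta> * ln ((exp b - exp a + 1) * (exp d - exp c + 1) / (exp d - exp c + exp b - exp a + 1))"
proof -
  have 1: "observable_families X Y a b = SA" by (simp add: fun_eq_iff obs_eq SA_def)
  have 2: "observable_families X Y c d = SB" by (simp add: fun_eq_iff obs_eq2 SB_def)
  have p1: "0 < exp b - exp a + 1" using KA by linarith
  have p2: "0 < exp d - exp c + 1" using KB by linarith
  have p3: "0 < exp d - exp c + exp b - exp a + 1" using KA KB by linarith
  have L: "ln ((exp b - exp a + 1) * (exp d - exp c + 1) / (exp d - exp c + exp b - exp a + 1))
      = ln (exp b - exp a + 1) + ln (exp d - exp c + 1) - ln (exp d - exp c + exp b - exp a + 1)"
    using p1 p2 p3 by (simp add: ln_div ln_mult)
  have e1: "1 + (exp b - exp a) = exp b - exp a + 1" by simp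
  have e2: "1 + (exp d - exp c) = exp d - exp c + 1" by simp
  have e3: "1 + (exp b - exp a + (exp d - exp c)) = exp d - exp c + exp b - exp a + 1" by simp
  show ?thesis
    unfolding 1 2 cov_value eA_def eB_def eAB_def e1 e2 e3 L by (simp only: ring_distribs)
qed

end

theorem corollary2:
  fixes M :: "'a measure" and \<theta> a b c d :: real
    and X :: "nat \<Rightarrow> 'a \<Rightarrow> real" and Y :: "nat \<Rightarrow> nat \<Rightarrow> 'a \<Rightarrow> real"
  assumes "prob_space M"
    and "\<theta> > 0"
    and "prob_space.indep_vars M (\<lambda>_. borel)
           (\<lambda>i. case i of Inl k \<Rightarrow> X k | Inr (k, j) \<Rightarrow> Y k j) UNIV"
    and "\<And>k. distributed M lborel (X k) (exponential_density \<theta>)"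
    and "\<And>k j. distributed M lborel (Y k j) (exponential_density (real (Suc j)))"
    and "0 \<le> a" "a < b" "b \<le> c" "c < d"
  shows "prob_space.covariance M (observable_families X Y a b) (observable_families X Y c d)
       = \<theta> * ln ((exp b - exp a + 1) * (exp d - exp c + 1) / (exp d - exp c + exp b - exp a + 1))"
proof -
  interpret imm4 M \<theta> X Y a b c d
  proof (intro imm4.intro imm.intro imm4_axioms.intro imm_axioms.intro)
    show "prob_space M" by (rule assms(1))
    show "0 < \<theta>" by (rule assms(2))
    show "prob_space.indep_vars M (\<lambda>_. borel) (\<lambda>i. case i of Inl k \<Rightarrow> X k | Inr (k, j) \<Rightarrow> Y k j) UNIV"
      by (rule assms(3))
    show "distributed M lborel (X k) (exponential_density \<theta>)" for k by (rule assms(4))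
    show "distributed M lborel (Y k j) (exponential_density (real (Suc j)))" for k j by (rule assms(5))
  qed (use assms in auto)
  show ?thesis by (rule final)
qed

end
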